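(* Let $G=(V,E)$ be a connected chordal graph, let $D\subseteq E$ be the set of edges of $G$ that lie in no $3$-cycle of $G$, let $\mathcal{H}'=(V',\mathcal{E}')$ be a Berge-acyclic subhypergraph of $\mathcal{H}(G)$ with the maximum number of hyperedges, and let $G'=(V,E(G[\mathcal{E}'])\cup D)$. Let $X(G')$ be the graph obtained from $G'$ by repeating the following step while the current graph has more than one connected component: choose two connected components $F_1,F_2$ that can be joined by a single edge $e\in E$ not in the current graph, and replace them by $F_1\cup F_2\cup\{e\}$. Then $X(G')$ is a spanning cactus subgraph of $G$ with the maximum number of edges.
   Context: All graphs are finite, simple and undirected. A graph is chordal if it has no induced cycle of length greater than $3$. A cactus is a connected graph in which every edge lies in at most one cycle; a spanning cactus subgraph of $G$ is a subgraph with vertex set $V(G)$ that is a cactus. A hypergraph is a pair $(V,\mathcal{E})$ with $V$ finite and $\mathcal{E}$ a set of nonempty subsets of $V$; a subhypergraph $(V',\mathcal{E}')$ has $V'\subseteq V$, $\mathcal{E}'\subseteq\mathcal{E}$. A Berge-cycle is a sequence $(E_1,x_1,\dots,E_n,x_n)$, $n\ge 2$, of distinct hyperedges $E_i$ and distinct vertices $x_i$ with $x_i\in E_i\cap E_{i+1}$ for all $i$ (indices mod $n$); a hypergraph is Berge-acyclic if it has no Berge-cycle. $\mathcal{H}(G)=(V,\mathcal{E})$ is the hypergraph whose hyperedges are exactly the $3$-element vertex sets inducing a triangle in $G$. For $\mathcal{E}'\subseteq\mathcal{E}$, $G[\mathcal{E}']$ is the graph whose vertices are those occurring in hyperedges of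 $\mathcal{E}'$, with $u,v$ adjacent iff $\{u,v\}\subseteq e$ for some $e\in\mathcal{E}'$. *)

theory Defs
  imports Main
begin

definition graph :: "'a set \<Rightarrow> 'a set set \<Rightarrow> bool" where
  "graph V E \<longleftrightarrow> finite V \<and> (\<forall>e\<in>E. \<exists>u v. u \<noteq> v \<and> u \<in> V \<and> v \<in> V \<and> e = {u, v})"

definition adj_rel :: "'a set set \<Rightarrow> ('a \<times> 'a) set" where
  "adj_rel E = {(u, v). {u, v} \<in> E}"

definition reachable :: "'a set set \<Rightarrow> 'a \<Rightarrow> 'a \<Rightarrow> bool" where
  "reachable E u v \<longleftrightarrow> (u, v) \<in> (adj_rel E)\<^sup>*"

definition connected_graph :: "'a set \<Rightarrow> 'a set set \<Rightarrow> bool" where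
  "connected_graph V E \<longleftrightarrow> V \<noteq> {} \<and> (\<forall>u\<in>V. \<forall>v\<in>V. reachable E u v)"

definition cycle_edges :: "'a list \<Rightarrow> 'a set set" where
  "cycle_edges xs = {{xs ! i, xs ! ((i + 1) mod length xs)} | i. i < length xs}"

definition is_cycle :: "'a set \<Rightarrow> 'a set set \<Rightarrow> 'a list \<Rightarrow> bool" where
  "is_cycle V E xs \<longleftrightarrow> length xs \<ge> 3 \<and> distinct xs \<and> set xs \<subseteq> V \<and> cycle_edges xs \<subseteq> E"

definition induced_cycle :: "'a set \<Rightarrow> 'a set set \<Rightarrow> 'a list \<Rightarrow> bool" where
  "induced_cycle V E xs \<longleftrightarrow> is_cycle V E xs \<and>
     (\<forall>u\<in>set xs. \<forall>v\<in>set xs. {u, v} \<in> E \<longrightarrow> {u, v} \<in> cycle_edges xs)"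

definition chordal :: "'a set \<Rightarrow> 'a set set \<Rightarrow> bool" where
  "chordal V E \<longleftrightarrow> \<not> (\<exists>xs. induced_cycle V E xs \<and> length xs > 3)"

text \<open>Cactus: connected, and every edge lies in at most one cycle (cycles viewed as
  subgraphs, i.e. identified with their edge sets).\<close>

definition cactus :: "'a set \<Rightarrow> 'a set set \<Rightarrow> bool" where
  "cactus V E \<longleftrightarrow> connected_graph V E \<and>
     (\<forall>e\<in>E. \<forall>xs ys. is_cycle V E xs \<and> is_cycle V E ys \<and>
        e \<in> cycle_edges xs \<and> e \<in> cycle_edges ys \<longrightarrow> cycle_edges xs = cycle_edges ys)"

definition spanning_cactus_subgraph :: "'a set \<Rightarrow> 'a set set \<Rightarrow> 'a set set \<Rightarrow> bool" where
  "spanning_cactus_subgraph V E C \<longleftrightarrow> C \<subseteq> E \<and> cactus V C"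

definition max_spanning_cactus :: "'a set \<Rightarrow> 'a set set \<Rightarrow> 'a set set \<Rightarrow> bool" where
  "max_spanning_cactus V E C \<longleftrightarrow> spanning_cactus_subgraph V E C \<and>
     (\<forall>C'. spanning_cactus_subgraph V E C' \<longrightarrow> card C' \<le> card C)"

definition hypergraph :: "'a set \<Rightarrow> 'a set set \<Rightarrow> bool" where
  "hypergraph V \<E> \<longleftrightarrow> finite V \<and> (\<forall>e\<in>\<E>. e \<noteq> {} \<and> e \<subseteq> V)"

definition subhypergraph :: "'a set \<Rightarrow> 'a set set \<Rightarrow> 'a set \<Rightarrow> 'a set set \<Rightarrow> bool" where
  "subhypergraph V' \<E>' V \<E> \<longleftrightarrow> hypergraph V' \<E>' \<and> V' \<subseteq> V \<and> \<E>' \<subseteq> \<E>"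

definition berge_cycle :: "'a set set \<Rightarrow> 'a set list \<Rightarrow> 'a list \<Rightarrow> bool" where
  "berge_cycle \<E> Es xs \<longleftrightarrow> length Es \<ge> 2 \<and> length xs = length Es \<and>
     distinct Es \<and> distinct xs \<and> set Es \<subseteq> \<E> \<and>
     (\<forall>i < length xs. xs ! i \<in> Es ! i \<inter> Es ! ((i + 1) mod length Es))"

definition berge_acyclic :: "'a set \<Rightarrow> 'a set set \<Rightarrow> bool" where
  "berge_acyclic V \<E> \<longleftrightarrow> \<not> (\<exists>Es xs. berge_cycle \<E> Es xs)"

text \<open>The triangle hypergraph H(G): hyperedges are the vertex sets of triangles.\<close>

definition triangles :: "'a set set \<Rightarrow> 'a set set" where
  "triangles E = {{a, b, c} | a b c. a \<noteq> b \<and> b \<noteq> c \<and> a \<noteq> c \<and>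
                     {a, b} \<in> E \<and> {b, c} \<in> E \<and> {a, c} \<in> E}"

definition hyp_graph_edges :: "'a set set \<Rightarrow> 'a set set" where
  "hyp_graph_edges \<E>' = {{u, v} | u v. u \<noteq> v \<and> (\<exists>e\<in>\<E>'. {u, v} \<subseteq> e)}"

definition non_triangle_edges :: "'a set set \<Rightarrow> 'a set set" where
  "non_triangle_edges E = {e \<in> E. \<not> (\<exists>t\<in>triangles E. e \<subseteq> t)}"

definition join_step :: "'a set \<Rightarrow> 'a set set \<Rightarrow> 'a set set \<Rightarrow> 'a set set \<Rightarrow> bool" where
  "join_step V E H H' \<longleftrightarrow> \<not> connected_graph V H \<and>
     (\<exists>u v. u \<in> V \<and> v \<in> V \<and> {u, v} \<in> E \<and> {u, v} \<notin> H \<and> \<not> reachable H u v \<and>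
            H' = insert {u, v} H)"

end

theory Submission
  imports Defs
begin


lemma adj_rel_sym: "(x,y) \<in> adj_rel H \<longleftrightarrow> (y,x) \<in> adj_rel H"
  by (auto simp: adj_rel_def insert_commute)

lemma adj_rel_conv: "(adj_rel H)\<inverse> = adj_rel H"
  by (auto simp: adj_rel_def insert_commute)

lemma reach_refl[simp]: "reachable H x x"
  by (simp add: reachable_def)

lemma reach_sym: "reachable H x y \<Longrightarrow> reachable H y x"
  unfolding reachable_def
  using rtrancl_converseI[of x y "adj_rel H"] adj_rel_conv[of H] by simp

lemma reach_trans: "reachable H x y \<Longrightarrow> reachable H y z \<Longrightarrow> reachable H x z"
  unfolding reachable_def by auto

lemma reach_edge: "{x,y} \<in> H \<Longrightarrow> reachable H x y"
  unfolding reachable_def adj_rel_def by auto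

lemma reach_mono: "reachable H x y \<Longrightarrow> H \<subseteq> H' \<Longrightarrow> reachable H' x y"
proof -
  assume a: "reachable H x y" "H \<subseteq> H'"
  have "adj_rel H \<subseteq> adj_rel H'" using a(2) by (auto simp: adj_rel_def)
  then show ?thesis using a(1) unfolding reachable_def using rtrancl_mono by blast
qed

lemma reach_sub:
  assumes "\<And>p q. {p,q} \<in> F \<Longrightarrow> reachable K p q" "reachable F x y"
  shows "reachable K x y"
proof -
  have "(x,y) \<in> (adj_rel F)\<^sup>*" using assms(2) by (simp add: reachable_def)
  then show ?thesis
  proof (induction rule: rtrancl_induct)
    case base then show ?case by simp
  next
    case (step y z)
    then have "{y,z} \<in> F" by (simp add: adj_rel_def)
    then have "reachable K y z" by (rule assms(1))
    then show ?case by (rule reach_trans[OF step.IH])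
  qed
qed

lemma reach_empty: "reachable {} x y \<longleftrightarrow> x = y"
  unfolding reachable_def adj_rel_def by auto

lemma reach_insert:
  "reachable (insert {u,v} H) x y \<longleftrightarrow> reachable H x y \<or> (reachable H x u \<and> reachable H v y)
     \<or> (reachable H x v \<and> reachable H u y)"
proof
  assume "reachable (insert {u,v} H) x y"
  then have "(x,y) \<in> (adj_rel (insert {u,v} H))\<^sup>*" by (simp add: reachable_def)
  then show "reachable H x y \<or> (reachable H x u \<and> reachable H v y) \<or> (reachable H x v \<and> reachable H u y)"
  proof (induction rule: rtrancl_induct)
    case base then show ?case by simp
  next
    case (step y z)
    have "{y,z} \<in> H \<or> {y,z} = {u,v}" using step(2) by (auto simp add: adj_rel_def)
    moreover have "{y,z} = {u,v} \<Longrightarrow> (y = u \<and> z = v) \<or> (y = v \<and> z = u)"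
      by (simp add: doubleton_eq_iff)
    ultimately consider "{y,z} \<in> H" | "y = u \<and> z = v" | "y = v \<and> z = u"
      by blast
    then show ?case
    proof cases
      case 1
      then have "reachable H y z" by (rule reach_edge)
      then have t: "\<And>a. reachable H a y \<Longrightarrow> reachable H a z" using reach_trans by metis
      show ?thesis using step(3) t by blast
    next
      case 2 then show ?thesis using step(3) reach_refl[of H v] reach_refl[of H u] by blast
    next
      case 3 then show ?thesis using step(3) reach_refl[of H v] reach_refl[of H u] by blast
    qed
  qed
next
  have m: "reachable H a b \<Longrightarrow> reachable (insert {u,v} H) a b" for a b
    by (erule reach_mono) auto
  have e: "reachable (insert {u,v} H) u v" by (simp add: reach_edge)
  have e2: "reachable (insert {u,v} H) v u" by (rule reach_sym[OF e])
  assume "reachable H x y \<or> (reachable H x u \<and> reachable H v y) \<or> (reachable H x v \<and> reachable H u y)"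
  then show "reachable (insert {u,v} H) x y"
  proof (elim disjE conjE)
    assume "reachable H x y" then show ?thesis using m by blast
  next
    assume "reachable H x u" "reachable H v y"
    then show ?thesis using m e reach_trans by metis
  next
    assume "reachable H x v" "reachable H u y"
    then show ?thesis using m e2 reach_trans by metis
  qed
qed

fun pedges :: "'a list \<Rightarrow> 'a set set" where
  "pedges (x # y # ys) = insert {x,y} (pedges (y # ys))"
| "pedges _ = {}"

lemma pedges_append:
  "pedges (xs @ ys) = pedges xs \<union> pedges ys \<union> (if xs \<noteq> [] \<and> ys \<noteq> [] then {{last xs, hd ys}} else {})"
proof (induction xs rule: pedges.induct)
  case (1 x y ys')
  then show ?case by auto
next
  case ("2_1") then show ?case by simp
next
  case ("2_2" x) then show ?case by (cases ys) auto
qed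

lemma pedges_snoc: "xs \<noteq> [] \<Longrightarrow> pedges (xs @ [y]) = insert {last xs, y} (pedges xs)"
  by (simp add: pedges_append)

lemma pedges_Cons: "xs \<noteq> [] \<Longrightarrow> pedges (x # xs) = insert {x, hd xs} (pedges xs)"
  by (cases xs) auto

lemma pedges_subset_set: "f \<in> pedges xs \<Longrightarrow> f \<subseteq> set xs"
  by (induction xs rule: pedges.induct) auto

lemma set_subset_pedges: "length xs \<ge> 2 \<Longrightarrow> x \<in> set xs \<Longrightarrow> \<exists>f\<in>pedges xs. x \<in> f"
proof (induction xs rule: pedges.induct)
  case (1 a b ys)
  then show ?case by (cases ys) auto
qed auto

lemma pedges_nth: "pedges xs = {{xs ! i, xs ! (Suc i)} | i. Suc i < length xs}"
proof (induction xs rule: pedges.induct)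
  case (1 x y ys)
  have "{{(x # y # ys) ! i, (x # y # ys) ! Suc i} | i. Suc i < length (x # y # ys)}
      = insert {x,y} {{(y # ys) ! i, (y # ys) ! Suc i} | i. Suc i < length (y # ys)}"
    (is "?L = ?R")
  proof
    show "?L \<subseteq> ?R"
    proof
      fix f assume "f \<in> ?L"
      then obtain i where i: "f = {(x # y # ys) ! i, (x # y # ys) ! Suc i}" "Suc i < length (x # y # ys)" by blast
      show "f \<in> ?R"
      proof (cases i)
        case 0 then show ?thesis using i by simp
      next
        case (Suc k) then show ?thesis using i by auto
      qed
    qed
  next
    show "?R \<subseteq> ?L"
    proof
      fix f assume "f \<in> ?R"
      then consider "f = {x,y}" | k where "f = {(y # ys) ! k, (y # ys) ! Suc k}" "Suc k < length (y # ys)" by blast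
      then show "f \<in> ?L"
      proof cases
        case 1 then show ?thesis by (rule_tac CollectI, rule_tac x=0 in exI) auto
      next
        case 2 then show ?thesis by (rule_tac CollectI, rule_tac x="Suc k" in exI) auto
      qed
    qed
  qed
  then show ?case using 1 by simp
next
  case "2_1" then show ?case by simp
next
  case ("2_2" v) then show ?case by simp
qed

lemma pedges_mono_take: "pedges (take n xs) \<subseteq> pedges xs"
  by (metis Un_iff append_take_drop_id pedges_append subsetI)

lemma pedges_mono_drop: "pedges (drop n xs) \<subseteq> pedges xs"
  by (metis Un_iff append_take_drop_id pedges_append subsetI)

lemma cycle_edges_pedges:
  assumes "xs \<noteq> []"
  shows "cycle_edges xs = insert {last xs, hd xs} (pedges xs)"
proof -
  let ?n = "length xs"
  have n: "?n > 0" using assms by simp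
  show ?thesis
  proof
    show "cycle_edges xs \<subseteq> insert {last xs, hd xs} (pedges xs)"
    proof
      fix f assume "f \<in> cycle_edges xs"
      then obtain i where i: "f = {xs ! i, xs ! ((i + 1) mod ?n)}" "i < ?n" by (auto simp: cycle_edges_def)
      show "f \<in> insert {last xs, hd xs} (pedges xs)"
      proof (cases "Suc i < ?n")
        case True
        then show ?thesis using i by (auto simp: pedges_nth)
      next
        case False
        then have "i = ?n - 1" using i by simp
        then show ?thesis using i n assms by (simp add: last_conv_nth hd_conv_nth insert_commute)
      qed
    qed
  next
    show "insert {last xs, hd xs} (pedges xs) \<subseteq> cycle_edges xs"
    proof
      fix f assume f: "f \<in> insert {last xs, hd xs} (pedges xs)"
      show "f \<in> cycle_edges xs"
      proof (cases "f = {last xs, hd xs}")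
        case True
        then have "f = {xs ! (?n - 1), xs ! (((?n - 1) + 1) mod ?n)}"
          using n assms by (simp add: last_conv_nth hd_conv_nth)
        then show ?thesis using n unfolding cycle_edges_def by (rule_tac CollectI, rule_tac x="?n-1" in exI) auto
      next
        case False
        then obtain i where i: "f = {xs ! i, xs ! Suc i}" "Suc i < ?n" using f by (auto simp: pedges_nth)
        then have "(i + 1) mod ?n = Suc i" by simp
        then show ?thesis using i unfolding cycle_edges_def by (rule_tac CollectI, rule_tac x="i" in exI) auto
      qed
    qed
  qed
qed

lemma cycle_edges_rotate1: "cycle_edges (rotate1 xs) = cycle_edges xs"
proof (cases xs)
  case Nil then show ?thesis by simp
next
  case (Cons x ys)
  show ?thesis
  proof (cases ys)
    case Nil then show ?thesis using Cons by simp
  next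
    case (Cons y zs)
    have ne: "ys \<noteq> []" using Cons by simp
    have "cycle_edges (ys @ [x]) = insert {x, hd ys} (pedges (ys @ [x]))"
      using ne by (simp add: cycle_edges_pedges)
    also have "\<dots> = insert {x, hd ys} (insert {last ys, x} (pedges ys))"
      using pedges_snoc[OF ne] by simp
    finally have 1: "cycle_edges (ys @ [x]) = insert {x, hd ys} (insert {last ys, x} (pedges ys))" .
    have "cycle_edges (x # ys) = insert {last ys, x} (pedges (x # ys))"
      using ne by (simp add: cycle_edges_pedges)
    also have "\<dots> = insert {last ys, x} (insert {x, hd ys} (pedges ys))"
      using pedges_Cons[OF ne] by simp
    finally show ?thesis using 1 \<open>xs = x # ys\<close> by (auto simp: insert_commute)
  qed
qed

lemma cycle_edges_rotate: "cycle_edges (rotate k xs) = cycle_edges xs"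
  by (induction k) (simp_all add: cycle_edges_rotate1)

lemma is_cycle_rotate: "is_cycle V E (rotate k xs) \<longleftrightarrow> is_cycle V E xs"
  by (simp add: is_cycle_def cycle_edges_rotate)

lemma reach_path:
  assumes "pedges xs \<subseteq> K" "y \<in> set xs"
  shows "reachable K (hd xs) y"
  using assms
proof (induction xs rule: pedges.induct)
  case (1 a b ys)
  then have "{a,b} \<in> K" by simp
  then have "reachable K a b" by (rule reach_edge)
  show ?case
  proof (cases "y = a")
    case True then show ?thesis by simp
  next
    case False
    then have "y \<in> set (b # ys)" using 1 by auto
    moreover have "pedges (b # ys) \<subseteq> K" using 1 by simp
    ultimately have "reachable K b y" using 1 by simp
    then show ?thesis using reach_trans[OF \<open>reachable K a b\<close>] by simp
  qed
qed auto

lemma reach_path2: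
  assumes "pedges xs \<subseteq> K" "x \<in> set xs" "y \<in> set xs"
  shows "reachable K x y"
  using reach_path[OF assms(1,2)] reach_path[OF assms(1,3)] reach_sym reach_trans by metis

lemma simple_path:
  assumes "reachable K x y"
  shows "\<exists>ps. ps \<noteq> [] \<and> distinct ps \<and> hd ps = x \<and> last ps = y \<and> pedges ps \<subseteq> K"
proof -
  have "(x,y) \<in> (adj_rel K)\<^sup>*" using assms by (simp add: reachable_def)
  then show ?thesis
  proof (induction rule: rtrancl_induct)
    case base
    then show ?case by (rule_tac x="[x]" in exI) simp
  next
    case (step z y)
    then obtain ps where ps: "ps \<noteq> []" "distinct ps" "hd ps = x" "last ps = z" "pedges ps \<subseteq> K" by blast
    have zy: "{z,y} \<in> K" using step(2) by (simp add: adj_rel_def)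
    show ?case
    proof (cases "y \<in> set ps")
      case True
      then obtain as bs where ab: "ps = as @ y # bs" by (metis split_list)
      let ?q = "as @ [y]"
      have "pedges ?q \<subseteq> pedges ps"
        using ab by (simp add: pedges_append) blast
      moreover have "hd ?q = x" using ab ps(3) by (cases as) auto
      moreover have "distinct ?q" using ab ps(2) by simp
      ultimately show ?thesis using ps by (rule_tac x="?q" in exI) auto
    next
      case False
      let ?q = "ps @ [y]"
      have "pedges ?q = insert {z,y} (pedges ps)" using ps by (simp add: pedges_snoc)
      then show ?thesis using ps zy False by (rule_tac x="?q" in exI) auto
    qed
  qed
qed



definition comps :: "'a set \<Rightarrow> 'a set set \<Rightarrow> 'a set set" where
  "comps V H = (\<lambda>x. {y\<in>V. reachable H x y}) ` V"

definition exc :: "'a set \<Rightarrow> 'a set set \<Rightarrow> int" where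
  "exc V H = int (card H) + int (card (comps V H)) - int (card V)"

lemma reach_insert_same:
  assumes "reachable H u v"
  shows "reachable (insert {u,v} H) x y \<longleftrightarrow> reachable H x y"
proof
  assume "reachable (insert {u,v} H) x y"
  then have "reachable H x y \<or> (reachable H x u \<and> reachable H v y) \<or> (reachable H x v \<and> reachable H u y)"
    by (simp add: reach_insert)
  then show "reachable H x y"
  proof (elim disjE conjE)
    assume "reachable H x u" "reachable H v y"
    then show ?thesis using assms reach_trans by metis
  next
    assume "reachable H x v" "reachable H u y"
    then show ?thesis using assms reach_trans reach_sym by metis
  qed
next
  assume "reachable H x y" then show "reachable (insert {u,v} H) x y" by (simp add: reach_insert)
qed

lemma comps_insert_reach:
  assumes "reachable H u v"
  shows "comps V (insert {u,v} H) = comps V H"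
  unfolding comps_def using reach_insert_same[OF assms] by simp

lemma comp_eq:
  assumes "reachable H x u"
  shows "{y\<in>V. reachable H x y} = {y\<in>V. reachable H u y}"
proof -
  have "reachable H x y \<longleftrightarrow> reachable H u y" for y
    using assms reach_trans reach_sym by metis
  then show ?thesis by simp
qed

lemma card_comps_insert_nreach:
  assumes "finite V" "u \<in> V" "v \<in> V" "\<not> reachable H u v"
  shows "int (card (comps V (insert {u,v} H))) = int (card (comps V H)) - 1"
proof -
  define C where "C x = {y\<in>V. reachable H x y}" for x
  define C' where "C' x = {y\<in>V. reachable (insert {u,v} H) x y}" for x
  have ru: "reachable H x u \<Longrightarrow> C' x = C u \<union> C v" for x
  proof -
    assume a: "reachable H x u"
    have "reachable (insert {u,v} H) x y \<longleftrightarrow> reachable H u y \<or> reachable H v y" for y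
      unfolding reach_insert using a reach_trans reach_sym by metis
    then show ?thesis unfolding C'_def C_def by auto
  qed
  have rv: "reachable H x v \<Longrightarrow> C' x = C u \<union> C v" for x
  proof -
    assume a: "reachable H x v"
    have "reachable (insert {u,v} H) x y \<longleftrightarrow> reachable H u y \<or> reachable H v y" for y
      unfolding reach_insert using a reach_trans reach_sym by metis
    then show ?thesis unfolding C'_def C_def by auto
  qed
  have rn: "\<not> reachable H x u \<Longrightarrow> \<not> reachable H x v \<Longrightarrow> C' x = C x" for x
  proof -
    assume a: "\<not> reachable H x u" "\<not> reachable H x v"
    have "reachable (insert {u,v} H) x y \<longleftrightarrow> reachable H x y" for y
      unfolding reach_insert using a by blast
    then show ?thesis unfolding C'_def C_def by auto
  qed
  have CuCv: "C u \<noteq> C v"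
  proof
    assume "C u = C v"
    moreover have "u \<in> C u" using assms(2) by (simp add: C_def)
    ultimately have "reachable H v u" by (simp add: C_def)
    then show False using assms(4) reach_sym by metis
  qed
  have c: "comps V H = C ` V" unfolding comps_def C_def by simp
  have c': "comps V (insert {u,v} H) = C' ` V" unfolding comps_def C'_def by simp
  have eq: "C' ` V = insert (C u \<union> C v) (C ` V - {C u, C v})"
  proof
    show "C' ` V \<subseteq> insert (C u \<union> C v) (C ` V - {C u, C v})"
    proof
      fix K assume "K \<in> C' ` V"
      then obtain x where x: "K = C' x" "x \<in> V" by (rule imageE)
      show "K \<in> insert (C u \<union> C v) (C ` V - {C u, C v})"
      proof (cases "reachable H x u \<or> reachable H x v")
        case True then show ?thesis using x ru rv by blast
      next
        case False
        then have "K = C x" using x rn by blast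
        moreover have "x \<in> C x" using x by (simp add: C_def)
        moreover have "x \<notin> C u" "x \<notin> C v" using False reach_sym unfolding C_def by fastforce+
        ultimately show ?thesis using x by auto
      qed
    qed
  next
    show "insert (C u \<union> C v) (C ` V - {C u, C v}) \<subseteq> C' ` V"
    proof
      fix K assume K: "K \<in> insert (C u \<union> C v) (C ` V - {C u, C v})"
      show "K \<in> C' ` V"
      proof (cases "K = C u \<union> C v")
        case True
        then have "K = C' u" using ru[of u] by simp
        then show ?thesis using assms(2) by blast
      next
        case False
        then have K2: "K \<in> C ` V" "K \<noteq> C u" "K \<noteq> C v" using K by auto
        obtain x where x0: "K = C x" "x \<in> V" using K2(1) by (rule imageE)
        then have x: "x \<in> V" "K = C x" "C x \<noteq> C u" "C x \<noteq> C v" using K2 by auto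
        have "\<not> reachable H x u" using x(3) comp_eq[of H x u V] unfolding C_def by blast
        moreover have "\<not> reachable H x v" using x(4) comp_eq[of H x v V] unfolding C_def by blast
        ultimately have "K = C' x" using rn x by simp
        then show ?thesis using x by blast
      qed
    qed
  qed
  have notin: "C u \<union> C v \<notin> C ` V - {C u, C v}"
  proof
    assume "C u \<union> C v \<in> C ` V - {C u, C v}"
    then have "C u \<union> C v \<in> C ` V" by (rule DiffD1)
    then obtain w where w: "C u \<union> C v = C w" "w \<in> V" by (rule imageE)
    have "u \<in> C u \<union> C v" "v \<in> C u \<union> C v" using assms(2,3) by (simp_all add: C_def)
    then have "u \<in> C w" "v \<in> C w" using w(1) by simp_all
    then have "reachable H w u" "reachable H w v" unfolding C_def by simp_all
    then show False using assms(4) reach_trans reach_sym by metis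
  qed
  have fin: "finite (C ` V)" using assms(1) by simp
  have mem: "C u \<in> C ` V" "C v \<in> C ` V" using assms(2,3) by auto
  have "card (C' ` V) = Suc (card (C ` V - {C u, C v}))"
    using eq notin fin by simp
  moreover have "card (C ` V - {C u, C v}) = card (C ` V) - 2"
    using fin mem CuCv by (simp add: card_Diff_subset)
  moreover have "card (C ` V) \<ge> 2"
  proof -
    have "{C u, C v} \<subseteq> C ` V" using mem by simp
    then have "card {C u, C v} \<le> card (C ` V)" using fin card_mono by blast
    then show ?thesis using CuCv by simp
  qed
  ultimately show ?thesis using c c' by simp
qed

lemma exc_insert_reach:
  assumes "finite H" "reachable H u v" "{u,v} \<notin> H"
  shows "exc V (insert {u,v} H) = exc V H + 1"
  unfolding exc_def using comps_insert_reach[OF assms(2)] assms(1,3) by simp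

lemma exc_insert_nreach:
  assumes "finite V" "finite H" "u \<in> V" "v \<in> V" "\<not> reachable H u v"
  shows "exc V (insert {u,v} H) = exc V H"
proof -
  have "{u,v} \<notin> H" using assms(5) reach_edge by metis
  then show ?thesis unfolding exc_def using card_comps_insert_nreach[OF assms(1,3,4,5)] assms(2) by simp
qed

lemma exc_insert_ge:
  assumes "finite V" "finite H" "u \<in> V" "v \<in> V"
  shows "exc V H \<le> exc V (insert {u,v} H)"
proof (cases "{u,v} \<in> H")
  case True then show ?thesis by (simp add: insert_absorb)
next
  case False
  then show ?thesis
    using exc_insert_reach[OF assms(2) _ False] exc_insert_nreach[OF assms] by (cases "reachable H u v") auto
qed

definition edges_in :: "'a set \<Rightarrow> 'a set set \<Rightarrow> bool" where
  "edges_in V F \<longleftrightarrow> (\<forall>f\<in>F. \<exists>u v. u \<in> V \<and> v \<in> V \<and> u \<noteq> v \<and> f = {u,v})"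

lemma exc_mono_union:
  assumes "finite V" "finite H" "finite F" "edges_in V F"
  shows "exc V H \<le> exc V (H \<union> F)"
  using assms(3,4)
proof (induction F rule: finite_induct)
  case empty then show ?case by simp
next
  case (insert f F)
  then obtain u v where uv: "u \<in> V" "v \<in> V" "f = {u,v}" unfolding edges_in_def by blast
  have "edges_in V F" using insert(4) unfolding edges_in_def by blast
  then have "exc V H \<le> exc V (H \<union> F)" using insert(3) by blast
  also have "\<dots> \<le> exc V (insert {u,v} (H \<union> F))"
    using exc_insert_ge[OF assms(1) _ uv(1,2)] assms(2) insert(1) by simp
  finally show ?case using uv by simp
qed

lemma exc_mono:
  assumes "finite V" "finite H'" "H \<subseteq> H'" "edges_in V H'"
  shows "exc V H \<le> exc V H'"
proof -
  have "finite H" using assms(2,3) finite_subset by blast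
  moreover have "H' = H \<union> (H' - H)" using assms(3) by blast
  moreover have "edges_in V (H' - H)" using assms(4) unfolding edges_in_def by blast
  ultimately show ?thesis using exc_mono_union[OF assms(1), of H "H' - H"] assms(2) by simp
qed

lemma comps_empty: "comps V {} = (\<lambda>x. {x}) ` V"
  unfolding comps_def reach_empty by auto

lemma exc_empty: "exc V {} = 0"
proof -
  have "card ((\<lambda>x. {x}) ` V) = card V" by (rule card_image) (simp add: inj_on_def)
  then show ?thesis unfolding exc_def comps_empty by simp
qed

lemma connected_card_comps:
  assumes "finite V" "connected_graph V H"
  shows "card (comps V H) = 1"
proof -
  have "V \<noteq> {}" using assms(2) by (simp add: connected_graph_def)
  moreover have "{y\<in>V. reachable H x y} = V" if "x \<in> V" for x
    using assms(2) that by (auto simp: connected_graph_def)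
  ultimately have "comps V H = {V}" unfolding comps_def by auto
  then show ?thesis by simp
qed

lemma connected_card:
  assumes "finite V" "connected_graph V H" "finite H"
  shows "int (card H) = int (card V) - 1 + exc V H"
  using connected_card_comps[OF assms(1,2)] unfolding exc_def by simp

lemma not_connected_ex:
  assumes "V \<noteq> {}" "\<not> connected_graph V H"
  shows "\<exists>u\<in>V. \<exists>v\<in>V. \<not> reachable H u v"
  using assms by (auto simp: connected_graph_def)



lemma path_cycle:
  assumes "u \<noteq> v" "reachable K u v" "{u,v} \<notin> K" "edges_in V K"
  shows "\<exists>ps. distinct ps \<and> hd ps = u \<and> last ps = v \<and> pedges ps \<subseteq> K \<and> length ps \<ge> 3
     \<and> set ps \<subseteq> V \<and> cycle_edges ps = insert {u,v} (pedges ps)"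
proof -
  obtain ps where ps: "ps \<noteq> []" "distinct ps" "hd ps = u" "last ps = v" "pedges ps \<subseteq> K"
    using simple_path[OF assms(2)] by blast
  have l2: "length ps \<ge> 2"
  proof (rule ccontr)
    assume "\<not> length ps \<ge> 2"
    then have "length ps < 2" by simp
    moreover have "length ps > 0" using ps(1) by simp
    ultimately have "length ps = 1" by linarith
    then obtain x where "ps = [x]" by (cases ps) auto
    then show False using ps assms(1) by simp
  qed
  have l3: "length ps \<ge> 3"
  proof (rule ccontr)
    assume "\<not> length ps \<ge> 3"
    then have "length ps = 2" using l2 by simp
    then obtain x y where "ps = [x,y]"
      by (metis One_nat_def Suc_1 length_0_conv length_Suc_conv)
    then show False using ps assms(3) by simp
  qed
  have sv: "set ps \<subseteq> V"
  proof
    fix x assume "x \<in> set ps"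
    then obtain f where f: "f \<in> pedges ps" "x \<in> f" using set_subset_pedges[OF l2] by blast
    then have "f \<in> K" using ps(5) by blast
    then obtain a b where "a \<in> V" "b \<in> V" "f = {a,b}" using assms(4) unfolding edges_in_def by meson
    then show "x \<in> V" using f(2) by auto
  qed
  have "cycle_edges ps = insert {u,v} (pedges ps)"
    using cycle_edges_pedges[OF ps(1)] ps(3,4) by (simp add: insert_commute)
  then show ?thesis using ps l3 sv by blast
qed

lemma cycle_in_insert:
  assumes "distinct ps" "length ps \<ge> 3" "set ps \<subseteq> V" "pedges ps \<subseteq> K"
    "cycle_edges ps = insert f (pedges ps)"
  shows "is_cycle V (insert f K) ps"
  using assms unfolding is_cycle_def by blast

lemma cycle_pedges_sub:
  assumes "is_cycle V K zs" shows "pedges zs \<subseteq> cycle_edges zs"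
proof -
  have "zs \<noteq> []" using assms by (auto simp: is_cycle_def)
  then show ?thesis using cycle_edges_pedges by blast
qed

lemma cycle_connected:
  assumes "is_cycle V K zs" "x \<in> set zs" "y \<in> set zs"
  shows "reachable (cycle_edges zs) x y"
  using reach_path2[OF cycle_pedges_sub[OF assms(1)] assms(2,3)] .

lemma cycle_edge_sub_set:
  assumes "f \<in> cycle_edges zs" shows "f \<subseteq> set zs"
proof -
  have "zs \<noteq> []" using assms by (auto simp: cycle_edges_def)
  then show ?thesis using assms cycle_edges_pedges[of zs] pedges_subset_set by fastforce
qed

lemma cycle_around:
  assumes "is_cycle V K zs" "{p,q} \<in> cycle_edges zs"
  shows "reachable (cycle_edges zs - {{p,q}}) p q"
proof -
  let ?n = "length zs"
  have n3: "?n \<ge> 3" and dz: "distinct zs" using assms(1) by (auto simp: is_cycle_def)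
  obtain i where i: "i < ?n" "{p,q} = {zs ! i, zs ! ((i + 1) mod ?n)}"
    using assms(2) by (auto simp: cycle_edges_def)
  define zs' where "zs' = rotate (Suc i) zs"
  have lz: "length zs' = ?n" and dz': "distinct zs'" using dz by (simp_all add: zs'_def)
  have ne: "zs' \<noteq> []" using lz n3 by auto
  have r: "\<And>m. m < ?n \<Longrightarrow> zs' ! m = zs ! ((Suc i + m) mod ?n)"
    unfolding zs'_def by (rule nth_rotate)
  have hd: "hd zs' = zs ! ((i + 1) mod ?n)"
  proof -
    have "zs \<noteq> []" using n3 by auto
    then show ?thesis using ne r[of 0] by (simp add: hd_conv_nth)
  qed
  have "last zs' = zs' ! (?n - 1)" using ne lz by (simp add: last_conv_nth)
  also have "\<dots> = zs ! ((Suc i + (?n - 1)) mod ?n)" using n3 r[of "?n - 1"] by simp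
  also have "(Suc i + (?n - 1)) mod ?n = i" using i n3
    by (metis Suc_diff_1 add_Suc_shift add_less_same_cancel2 le_eq_less_or_eq less_nat_zero_code mod_add_self2 mod_less not_less_eq_eq numeral_3_eq_3 zero_less_Suc)
  finally have last: "last zs' = zs ! i" .
  have ce: "cycle_edges zs' = cycle_edges zs" unfolding zs'_def by (rule cycle_edges_rotate)
  have pq: "{p,q} = {last zs', hd zs'}" using i hd last by (simp add: insert_commute)
  have notin: "{p,q} \<notin> pedges zs'"
  proof
    assume "{p,q} \<in> pedges zs'"
    then obtain j where j: "{p,q} = {zs' ! j, zs' ! Suc j}" "Suc j < ?n" using lz by (auto simp: pedges_nth)
    have l: "last zs' = zs' ! (?n - 1)" "hd zs' = zs' ! 0" using ne lz by (simp_all add: last_conv_nth hd_conv_nth)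
    have "{zs' ! j, zs' ! Suc j} = {zs' ! (?n - 1), zs' ! 0}" using j pq l by simp
    then have "(zs' ! j = zs' ! (?n - 1) \<and> zs' ! Suc j = zs' ! 0) \<or> (zs' ! j = zs' ! 0 \<and> zs' ! Suc j = zs' ! (?n - 1))"
      by (simp add: doubleton_eq_iff)
    moreover have e: "\<And>a b. a < ?n \<Longrightarrow> b < ?n \<Longrightarrow> (zs' ! a = zs' ! b) = (a = b)"
      using nth_eq_iff_index_eq[OF dz'] lz by simp
    moreover have "j < ?n" "?n - 1 < ?n" "0 < ?n" using j(2) n3 by auto
    ultimately have "(j = ?n - 1 \<and> Suc j = 0) \<or> (j = 0 \<and> Suc j = ?n - 1)"
      using j(2) by simp
    then show False using j(2) n3 by linarith
  qed
  have sub: "pedges zs' \<subseteq> cycle_edges zs - {{p,q}}"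
    using cycle_edges_pedges[OF ne] ce notin by blast
  have "last zs' \<in> set zs'" "hd zs' \<in> set zs'" using ne by simp_all
  then have "reachable (cycle_edges zs - {{p,q}}) (last zs') (hd zs')"
    using reach_path2[OF sub] by blast
  then show ?thesis using pq
    by (metis doubleton_eq_iff reach_sym)
qed

lemma cycle_degree:
  assumes "is_cycle V K zs" "f \<in> cycle_edges zs" "x \<in> f" "i < length zs" "x = zs ! i"
  shows "f = {zs ! i, zs ! ((i + 1) mod length zs)} \<or> f = {zs ! ((i + length zs - 1) mod length zs), zs ! i}"
proof -
  let ?n = "length zs"
  have n3: "?n \<ge> 3" and dz: "distinct zs" using assms(1) by (auto simp: is_cycle_def)
  obtain k where k: "k < ?n" "f = {zs ! k, zs ! ((k + 1) mod ?n)}"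
    using assms(2) by (auto simp: cycle_edges_def)
  have km: "(k + 1) mod ?n < ?n" using n3 by (intro mod_less_divisor) linarith
  have "x \<in> {zs ! k, zs ! ((k + 1) mod ?n)}" using assms(3) k(2) by (simp only:)
  then have xo: "x = zs ! k \<or> x = zs ! ((k + 1) mod ?n)" by (simp only: insert_iff empty_iff simp_thms)
  show ?thesis
  proof (cases "x = zs ! k")
    case True
    then have "zs ! k = zs ! i" using assms(5) by metis
    then have "k = i" using nth_eq_iff_index_eq[OF dz k(1) assms(4)] by metis
    then show ?thesis using k by simp
  next
    case False
    then have "x = zs ! ((k + 1) mod ?n)" using xo by simp
    then have "zs ! ((k + 1) mod ?n) = zs ! i" using assms(5) by metis
    then have ki: "(k + 1) mod ?n = i" using nth_eq_iff_index_eq[OF dz km assms(4)] by metis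
    have "k = (i + ?n - 1) mod ?n"
    proof (cases "k + 1 = ?n")
      case True
      then have "i = 0" using ki by simp
      then show ?thesis using True by simp
    next
      case False
      then have "k + 1 < ?n" using k by simp
      then have "i = k + 1" using ki by simp
      then show ?thesis using \<open>k + 1 < ?n\<close> by simp
    qed
    then show ?thesis using k ki by (simp add: insert_commute)
  qed
qed

lemma cycle_degree2:
  assumes "is_cycle V K zs" "x \<in> set zs" "f1 \<in> cycle_edges zs" "f2 \<in> cycle_edges zs" "f3 \<in> cycle_edges zs"
    "x \<in> f1" "x \<in> f2" "x \<in> f3"
  shows "f1 = f2 \<or> f1 = f3 \<or> f2 = f3"
proof -
  obtain i where i: "i < length zs" "x = zs ! i" using assms(2) by (metis in_set_conv_nth)
  show ?thesis using cycle_degree[OF assms(1) assms(3) assms(6) i] cycle_degree[OF assms(1) assms(4) assms(7) i]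
    cycle_degree[OF assms(1) assms(5) assms(8) i] by metis
qed



lemma graph_edge: "graph V E \<Longrightarrow> f \<in> E \<Longrightarrow> \<exists>a b. a \<noteq> b \<and> a \<in> V \<and> b \<in> V \<and> f = {a,b}"
  unfolding graph_def by blast

lemma graph_edge_neq: "graph V E \<Longrightarrow> {u,v} \<in> E \<Longrightarrow> u \<noteq> v"
proof
  assume "graph V E" "{u,v} \<in> E" "u = v"
  then obtain a b where "a \<noteq> b" "{u} = {a,b}" using graph_edge by fastforce
  then show False by (metis doubleton_eq_iff insert_absorb2)
qed

lemma graph_edges_in: "graph V E \<Longrightarrow> F \<subseteq> E \<Longrightarrow> edges_in V F"
  unfolding edges_in_def graph_def by blast

lemma cycle3_triangle:
  assumes "is_cycle V E zs" "length zs = 3"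
  shows "set zs \<in> triangles E"
proof -
  have "\<exists>a b c. zs = [a,b,c]" using assms(2) by (auto simp: numeral_3_eq_3 length_Suc_conv)
  then obtain a b c where abc: "zs = [a,b,c]" by blast
  have ce: "cycle_edges zs = {{c,a},{a,b},{b,c}}" using abc cycle_edges_pedges[of zs] by simp
  have "{a,b} \<in> E" "{b,c} \<in> E" "{a,c} \<in> E" using assms(1) ce by (auto simp: is_cycle_def insert_commute)
  moreover have "a \<noteq> b" "b \<noteq> c" "a \<noteq> c" using assms(1) abc by (auto simp: is_cycle_def)
  ultimately have "{a,b,c} \<in> triangles E" unfolding triangles_def by blast
  then show ?thesis using abc by simp
qed

lemma triangle_of_cycle:
  assumes g: "graph V E" and ch: "chordal V E" and "is_cycle V E zs" "d \<in> cycle_edges zs"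
  shows "\<exists>t\<in>triangles E. d \<subseteq> t \<and> t \<subseteq> set zs"
  using assms(3,4)
proof (induction "length zs" arbitrary: zs d rule: less_induct)
  case less
  let ?n = "length zs"
  have n3: "?n \<ge> 3" and dz: "distinct zs" and sV: "set zs \<subseteq> V" and ceE: "cycle_edges zs \<subseteq> E"
    using less.prems(1) by (auto simp: is_cycle_def)
  show ?case
  proof (cases "induced_cycle V E zs")
    case True
    then have "\<not> ?n > 3" using ch by (auto simp: chordal_def)
    then have "?n = 3" using n3 by simp
    then have "set zs \<in> triangles E" using cycle3_triangle[OF less.prems(1)] by simp
    moreover have "d \<subseteq> set zs" using cycle_edge_sub_set[OF less.prems(2)] .
    ultimately show ?thesis by blast
  next
    case False
    then obtain u v where uv: "u \<in> set zs" "v \<in> set zs" "{u,v} \<in> E" "{u,v} \<notin> cycle_edges zs"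
      using less.prems(1) unfolding induced_cycle_def by blast
    have uneqv: "u \<noteq> v" using graph_edge_neq[OF g uv(3)] .
    obtain i where i: "i < ?n" "zs ! i = u" using uv(1) by (metis in_set_conv_nth)
    define zs' where "zs' = rotate i zs"
    have r: "\<And>m. m < ?n \<Longrightarrow> zs' ! m = zs ! ((i + m) mod ?n)"
      unfolding zs'_def by (rule nth_rotate)
    have lz: "length zs' = ?n" by (simp add: zs'_def)
    have dz': "distinct zs'" using dz by (simp add: zs'_def)
    have setz: "set zs' = set zs" by (simp add: zs'_def)
    have cez: "cycle_edges zs' = cycle_edges zs" unfolding zs'_def by (rule cycle_edges_rotate)
    have ne: "zs' \<noteq> []" using lz n3 by auto
    have zne: "zs \<noteq> []" using n3 by auto
    have z0: "zs' ! 0 = u" using r[of 0] i zne by simp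
    have hdz: "hd zs' = u" using z0 ne by (simp add: hd_conv_nth)
    obtain j where j: "j < ?n" "zs' ! j = v" using uv(2) setz lz by (metis in_set_conv_nth)
    have j0: "j \<noteq> 0"
    proof
      assume "j = 0" then have "u = v" using j z0 by metis
      then show False using uneqv by simp
    qed
    have pz: "pedges zs' \<subseteq> cycle_edges zs'" using cycle_edges_pedges[OF ne] by blast
    have j1: "j \<noteq> 1"
    proof
      assume "j = 1"
      then have "{zs' ! 0, zs' ! Suc 0} \<in> pedges zs'" using lz n3 by (auto simp: pedges_nth)
      then have "{u,v} \<in> cycle_edges zs" using z0 j \<open>j = 1\<close> pz cez by auto
      then show False using uv(4) by simp
    qed
    have jn: "j \<noteq> ?n - 1"
    proof
      assume "j = ?n - 1"
      then have "last zs' = v" using j ne lz by (simp add: last_conv_nth)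
      then have "{v,u} \<in> cycle_edges zs'" using cycle_edges_pedges[OF ne] hdz by simp
      then show False using uv(4) cez by (simp add: insert_commute)
    qed
    have j2: "2 \<le> j" "j + 2 \<le> ?n" using j0 j1 jn j(1) by auto
    define Z1 where "Z1 = take (Suc j) zs'"
    define Z2 where "Z2 = u # drop j zs'"
    have lZ1: "length Z1 = Suc j" using j lz by (simp add: Z1_def)
    have lZ2: "length Z2 = Suc (?n - j)" using j lz by (simp add: Z2_def)
    have Z1ne: "Z1 \<noteq> []" using ne by (simp add: Z1_def)
    have dne: "drop j zs' \<noteq> []" using j lz by simp
    have lastZ1: "last Z1 = v" using lZ1 j Z1ne by (simp add: last_conv_nth Z1_def)
    have hdZ1: "hd Z1 = u" using hdz ne by (simp add: Z1_def)
    have hdd: "hd (drop j zs') = v" using j lz by (simp add: hd_drop_conv_nth)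
    have lastZ2: "last Z2 = last zs'" using dne by (simp add: Z2_def)
    have ceZ1: "cycle_edges Z1 = insert {v,u} (pedges Z1)"
      using cycle_edges_pedges[OF Z1ne] lastZ1 hdZ1 by simp
    have ceZ2: "cycle_edges Z2 = insert {last zs', u} (insert {u,v} (pedges (drop j zs')))"
      using cycle_edges_pedges[of Z2] lastZ2 pedges_Cons[OF dne, of u] hdd by (simp add: Z2_def)
    have pZ1: "pedges Z1 \<subseteq> pedges zs'" unfolding Z1_def by (rule pedges_mono_take)
    have pd: "pedges (drop j zs') \<subseteq> pedges zs'" by (rule pedges_mono_drop)
    have lastE: "{last zs', u} \<in> cycle_edges zs'" using cycle_edges_pedges[OF ne] hdz by simp
    have cycZ1: "is_cycle V E Z1"
      unfolding is_cycle_def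
    proof (intro conjI)
      show "3 \<le> length Z1" using lZ1 j2 by simp
      show "distinct Z1" using dz' by (simp add: Z1_def)
      show "set Z1 \<subseteq> V" using sV setz set_take_subset[of "Suc j" zs'] by (auto simp: Z1_def)
      show "cycle_edges Z1 \<subseteq> E" using ceZ1 pZ1 pz cez ceE uv(3) by (auto simp: insert_commute)
    qed
    have cycZ2: "is_cycle V E Z2"
      unfolding is_cycle_def
    proof (intro conjI)
      show "3 \<le> length Z2" using lZ2 j2 by simp
      have t0: "take j zs' ! 0 = u" using z0 j0 by simp
      have "0 < length (take j zs')" using j0 j lz by simp
      then have "u \<in> set (take j zs')" using t0 nth_mem by metis
      moreover have "distinct (take j zs' @ drop j zs')" using dz' by simp
      then have "set (take j zs') \<inter> set (drop j zs') = {}" by (simp only: distinct_append)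
      ultimately have "u \<notin> set (drop j zs')" by blast
      then show "distinct Z2" using dz' by (simp add: Z2_def)
      show "set Z2 \<subseteq> V" using sV setz set_drop_subset[of j zs'] uv(1) by (auto simp: Z2_def)
      show "cycle_edges Z2 \<subseteq> E" using ceZ2 pd pz cez ceE uv(3) lastE by auto
    qed
    have cover: "cycle_edges zs \<subseteq> cycle_edges Z1 \<union> cycle_edges Z2"
    proof
      fix f assume "f \<in> cycle_edges zs"
      then have f: "f \<in> insert {last zs', hd zs'} (pedges zs')" using cez cycle_edges_pedges[OF ne] by simp
      show "f \<in> cycle_edges Z1 \<union> cycle_edges Z2"
      proof (cases "f = {last zs', hd zs'}")
        case True then show ?thesis using ceZ2 hdz by simp
      next
        case False
        then obtain k where k: "f = {zs' ! k, zs' ! Suc k}" "Suc k < ?n" using f lz by (auto simp: pedges_nth)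
        show ?thesis
        proof (cases "Suc k \<le> j")
          case True
          then have "f = {Z1 ! k, Z1 ! Suc k}" using k by (simp add: Z1_def)
          then have "f \<in> pedges Z1" using True lZ1 by (auto simp: pedges_nth)
          then show ?thesis using ceZ1 by simp
        next
          case False
          then have "f = {drop j zs' ! (k - j), drop j zs' ! Suc (k - j)}" using k lz
            by (simp add: Suc_diff_le)
          moreover have "Suc (k - j) < length (drop j zs')" using k lz False by simp
          ultimately have "f \<in> pedges (drop j zs')" by (auto simp: pedges_nth)
          then show ?thesis using ceZ2 by simp
        qed
      qed
    qed
    have sZ1: "set Z1 \<subseteq> set zs" using setz set_take_subset[of "Suc j" zs'] by (auto simp: Z1_def)
    have sZ2: "set Z2 \<subseteq> set zs" using setz set_drop_subset[of j zs'] uv(1) by (auto simp: Z2_def)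
    have "d \<in> cycle_edges Z1 \<or> d \<in> cycle_edges Z2" using cover less.prems(2) by blast
    then show ?thesis
    proof
      assume dZ: "d \<in> cycle_edges Z1"
      have "length Z1 < ?n" using lZ1 j2 by simp
      then obtain t where t: "t \<in> triangles E" "d \<subseteq> t" "t \<subseteq> set Z1"
        using less.hyps[OF _ cycZ1 dZ] by blast
      have "t \<subseteq> set zs" using t(3) sZ1 by (rule order_trans)
      then show ?thesis using t(1,2) by blast
    next
      assume dZ: "d \<in> cycle_edges Z2"
      have "length Z2 < ?n" using lZ2 j2 by simp
      then obtain t where t: "t \<in> triangles E" "d \<subseteq> t" "t \<subseteq> set Z2"
        using less.hyps[OF _ cycZ2 dZ] by blast
      have "t \<subseteq> set zs" using t(3) sZ2 by (rule order_trans)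
      then show ?thesis using t(1,2) by blast
    qed
  qed
qed



lemma hyp_edge: "u \<noteq> v \<Longrightarrow> e \<in> T \<Longrightarrow> u \<in> e \<Longrightarrow> v \<in> e \<Longrightarrow> {u,v} \<in> hyp_graph_edges T"
  unfolding hyp_graph_edges_def by blast

lemma hyp_edgeE:
  assumes "{u,v} \<in> hyp_graph_edges T"
  shows "u \<noteq> v \<and> (\<exists>e\<in>T. u \<in> e \<and> v \<in> e)"
proof -
  obtain u' v' e where "{u,v} = {u',v'}" "u' \<noteq> v'" "e \<in> T" "{u',v'} \<subseteq> e"
    using assms unfolding hyp_graph_edges_def by blast
  then show ?thesis by (metis doubleton_eq_iff insert_subset)
qed

lemma hyp_mem: "f \<in> hyp_graph_edges T \<longleftrightarrow> (\<exists>u v e. f = {u,v} \<and> u \<noteq> v \<and> e \<in> T \<and> u \<in> e \<and> v \<in> e)"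
  unfolding hyp_graph_edges_def by auto

lemma hyp_insert: "hyp_graph_edges (insert t T) = hyp_graph_edges {t} \<union> hyp_graph_edges T"
proof (intro equalityI subsetI)
  fix f assume "f \<in> hyp_graph_edges (insert t T)"
  then obtain u v e where "f = {u,v}" "u \<noteq> v" "e \<in> insert t T" "u \<in> e" "v \<in> e" unfolding hyp_mem by blast
  then show "f \<in> hyp_graph_edges {t} \<union> hyp_graph_edges T" unfolding Un_iff hyp_mem by blast
next
  fix f assume "f \<in> hyp_graph_edges {t} \<union> hyp_graph_edges T"
  then obtain u v e where "f = {u,v}" "u \<noteq> v" "e \<in> insert t T" "u \<in> e" "v \<in> e" unfolding Un_iff hyp_mem by blast
  then show "f \<in> hyp_graph_edges (insert t T)" unfolding hyp_mem by blast
qed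

lemma hyp_mono: "T \<subseteq> T' \<Longrightarrow> hyp_graph_edges T \<subseteq> hyp_graph_edges T'"
  unfolding subset_iff[of "hyp_graph_edges T"] hyp_mem by blast

lemma hyp_tri:
  assumes "a \<noteq> b" "b \<noteq> c" "a \<noteq> c"
  shows "hyp_graph_edges {{a,b,c}} = {{a,b},{b,c},{a,c}}"
proof
  show "hyp_graph_edges {{a,b,c}} \<subseteq> {{a,b},{b,c},{a,c}}"
  proof
    fix f assume "f \<in> hyp_graph_edges {{a,b,c}}"
    then obtain u v where uv: "f = {u,v}" "u \<noteq> v" "{u,v} \<subseteq> {a,b,c}" unfolding hyp_graph_edges_def by blast
    then have "u \<in> {a,b,c}" "v \<in> {a,b,c}" by auto
    then show "f \<in> {{a,b},{b,c},{a,c}}" using uv(1,2) by (auto simp: insert_commute)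
  qed
next
  show "{{a,b},{b,c},{a,c}} \<subseteq> hyp_graph_edges {{a,b,c}}"
    using assms hyp_edge[of _ _ "{a,b,c}" "{{a,b,c}}"] by auto
qed

lemma triangleE:
  assumes "t \<in> triangles E"
  shows "\<exists>a b c. t = {a,b,c} \<and> a \<noteq> b \<and> b \<noteq> c \<and> a \<noteq> c \<and> {a,b} \<in> E \<and> {b,c} \<in> E \<and> {a,c} \<in> E"
  using assms unfolding triangles_def by blast

lemma hyp_sub_E:
  assumes "T \<subseteq> triangles E" shows "hyp_graph_edges T \<subseteq> E"
proof
  fix f assume "f \<in> hyp_graph_edges T"
  then obtain u v e where uv: "f = {u,v}" "u \<noteq> v" "e \<in> T" "u \<in> e" "v \<in> e"
    unfolding hyp_graph_edges_def by blast
  obtain a b c where abc: "e = {a,b,c}" "a \<noteq> b" "b \<noteq> c" "a \<noteq> c" "{a,b} \<in> E" "{b,c} \<in> E" "{a,c} \<in> E"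
    using triangleE assms uv(3) by blast
  have "{u,v} \<in> hyp_graph_edges {{a,b,c}}" using uv abc hyp_edge[of u v "{a,b,c}"] by blast
  then have "f \<in> {{a,b},{b,c},{a,c}}" using hyp_tri[OF abc(2,3,4)] uv(1) by simp
  then have "f = {a,b} \<or> f = {b,c} \<or> f = {a,c}" by simp
  then show "f \<in> E" using abc(5-7) by metis
qed

lemma berge_acyclic_mono: "berge_acyclic W T \<Longrightarrow> T' \<subseteq> T \<Longrightarrow> berge_acyclic W' T'"
  unfolding berge_acyclic_def berge_cycle_def by blast

lemma berge_two:
  assumes "berge_acyclic W T" "t1 \<in> T" "t2 \<in> T" "x \<noteq> y" "x \<in> t1" "y \<in> t1" "x \<in> t2" "y \<in> t2"
  shows "t1 = t2"
proof (rule ccontr)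
  assume ne: "t1 \<noteq> t2"
  have "berge_cycle T [t1,t2] [x,y]"
    unfolding berge_cycle_def
  proof (intro conjI allI impI)
    fix i assume "i < length [x,y]"
    then have "i = 0 \<or> i = 1" by auto
    then show "[x, y] ! i \<in> [t1, t2] ! i \<inter> [t1, t2] ! ((i + 1) mod length [t1, t2])"
      using assms by auto
  qed (use assms ne in auto)
  then show False using assms(1) unfolding berge_acyclic_def by blast
qed

lemma berge_insert:
  assumes "berge_acyclic W T" "t \<notin> T"
    "\<And>x y. x \<in> t \<Longrightarrow> y \<in> t \<Longrightarrow> x \<noteq> y \<Longrightarrow> \<not> reachable (hyp_graph_edges T) x y"
  shows "berge_acyclic W' (insert t T)"
  unfolding berge_acyclic_def
proof
  assume "\<exists>Es xs. berge_cycle (insert t T) Es xs"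
  then obtain Es xs where bc: "berge_cycle (insert t T) Es xs" by blast
  let ?n = "length Es"
  have n2: "?n \<ge> 2" and lx: "length xs = ?n" and dE: "distinct Es" and dx: "distinct xs"
    and sE: "set Es \<subseteq> insert t T"
    and cond: "\<And>i. i < ?n \<Longrightarrow> xs ! i \<in> Es ! i \<inter> Es ! ((i + 1) mod ?n)"
    using bc unfolding berge_cycle_def by auto
  have n0: "0 < ?n" using n2 by linarith
  show False
  proof (cases "t \<in> set Es")
    case False
    then have "berge_cycle T Es xs" using bc unfolding berge_cycle_def by auto
    then show False using assms(1) unfolding berge_acyclic_def by blast
  next
    case True
    then obtain k where k: "k < ?n" "Es ! k = t" by (metis in_set_conv_nth)
    have step: "reachable (hyp_graph_edges T) (xs ! k) (xs ! ((k + j) mod ?n))" if "j \<le> ?n - 1" for j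
      using that
    proof (induction j)
      case 0
      then show ?case using k by simp
    next
      case (Suc j)
      let ?a = "(k + j) mod ?n"
      let ?b = "(k + Suc j) mod ?n"
      have an: "?a < ?n" "?b < ?n" using n0 by simp_all
      have ab: "(?a + 1) mod ?n = ?b" by (simp add: mod_Suc_eq)
      have xa: "xs ! ?a \<in> Es ! ?b" using cond[OF an(1)] ab by simp
      have xb: "xs ! ?b \<in> Es ! ?b" using cond[OF an(2)] by simp
      have bk: "?b \<noteq> k"
      proof
        assume "?b = k"
        then have "(k + Suc j) mod ?n = k mod ?n" using k by simp
        then have "?n dvd (k + Suc j) - k" using mod_eq_dvd_iff_nat[of k "k + Suc j" ?n] by simp
        then have "?n dvd Suc j" by simp
        moreover have "Suc j < ?n" using Suc.prems n2 by auto
        ultimately show False using dvd_imp_le by fastforce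
      qed
      have "Es ! ?b \<noteq> t" using nth_eq_iff_index_eq[OF dE an(2) k(1)] bk k(2) by simp
      moreover have "Es ! ?b \<in> insert t T" using sE an(2) nth_mem by blast
      ultimately have ET: "Es ! ?b \<in> T" by simp
      have r: "reachable (hyp_graph_edges T) (xs ! ?a) (xs ! ?b)"
      proof (cases "xs ! ?a = xs ! ?b")
        case True then show ?thesis by simp
      next
        case False
        then have "{xs ! ?a, xs ! ?b} \<in> hyp_graph_edges T" using hyp_edge ET xa xb by metis
        then show ?thesis by (rule reach_edge)
      qed
      have "reachable (hyp_graph_edges T) (xs ! k) (xs ! ?a)" using Suc by simp
      then show ?case using r reach_trans by metis
    qed
    let ?p = "(k + (?n - 1)) mod ?n"
    have r: "reachable (hyp_graph_edges T) (xs ! k) (xs ! ?p)" using step by simp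
    have pn: "?p < ?n" using n0 by simp
    have pk: "(?p + 1) mod ?n = k"
    proof -
      have "(?p + 1) mod ?n = (k + (?n - 1) + 1) mod ?n" by (simp add: mod_Suc_eq)
      also have "k + (?n - 1) + 1 = k + ?n" using n2 by simp
      finally show ?thesis using k by simp
    qed
    have xk: "xs ! k \<in> t" using cond[OF k(1)] k(2) by simp
    have xp: "xs ! ?p \<in> t" using cond[OF pn] pk k(2) by simp
    have "?p \<noteq> k"
    proof
      assume "?p = k"
      then have "(k + 1) mod ?n = k" using pk by simp
      show False
      proof (cases "k + 1 < ?n")
        case True
        then have "(k + 1) mod ?n = k + 1" by simp
        then show False using \<open>(k + 1) mod ?n = k\<close> by simp
      next
        case False
        then have "k + 1 = ?n" using k(1) by simp
        then have "(k + 1) mod ?n = 0" by simp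
        then show False using \<open>(k + 1) mod ?n = k\<close> \<open>k + 1 = ?n\<close> n2 by simp
      qed
    qed
    then have "xs ! k \<noteq> xs ! ?p" using nth_eq_iff_index_eq[OF dx] k(1) pn lx by simp
    then show False using assms(3)[OF xk xp] r by simp
  qed
qed



definition bpath :: "'a set set \<Rightarrow> 'a set list \<Rightarrow> 'a list \<Rightarrow> bool" where
  "bpath T Es xs \<longleftrightarrow> length xs = Suc (length Es) \<and> distinct Es \<and> distinct xs \<and> set Es \<subseteq> T \<and>
     (\<forall>i<length Es. xs ! i \<in> Es ! i \<and> xs ! (Suc i) \<in> Es ! i)"

lemma berge_path:
  assumes "reachable (hyp_graph_edges T) x y"
  shows "\<exists>Es xs. bpath T Es xs \<and> xs ! 0 = x \<and> last xs = y"
proof -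
  have "(x,y) \<in> (adj_rel (hyp_graph_edges T))\<^sup>*" using assms by (simp add: reachable_def)
  then show ?thesis
  proof (induction rule: rtrancl_induct)
    case base
    have "bpath T [] [x]" by (simp add: bpath_def)
    then show ?case by force
  next
    case (step z y)
    then obtain Es xs where bp: "bpath T Es xs" and x0: "xs ! 0 = x" and lz: "last xs = z" by blast
    have "{z,y} \<in> hyp_graph_edges T" using step(2) by (simp add: adj_rel_def)
    then obtain F where F: "F \<in> T" "z \<in> F" "y \<in> F" using hyp_edgeE by metis
    have lx: "length xs = Suc (length Es)" and dE: "distinct Es" and dx: "distinct xs" and sE: "set Es \<subseteq> T"
      and c: "\<And>i. i < length Es \<Longrightarrow> xs ! i \<in> Es ! i \<and> xs ! (Suc i) \<in> Es ! i"
      using bp unfolding bpath_def by auto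
    have xne: "xs \<noteq> []" using lx by auto
    show ?case
    proof (cases "y \<in> set xs")
      case True
      then obtain m where m: "m < length xs" "xs ! m = y" by (metis in_set_conv_nth)
      let ?Es = "take m Es" and ?xs = "take (Suc m) xs"
      have "bpath T ?Es ?xs"
        unfolding bpath_def
      proof (intro conjI allI impI)
        show "length ?xs = Suc (length ?Es)" using m lx by simp
        show "distinct ?Es" using dE by simp
        show "distinct ?xs" using dx by simp
        show "set ?Es \<subseteq> T" using sE set_take_subset by fast
        fix i assume "i < length ?Es"
        then have i: "i < m" "i < length Es" by auto
        show "?xs ! i \<in> ?Es ! i" using c[OF i(2)] i by simp
        show "?xs ! Suc i \<in> ?Es ! i" using c[OF i(2)] i by simp
      qed
      moreover have "?xs ! 0 = x" using x0 by simp
      moreover have "last ?xs = y" using m by (simp add: take_Suc_conv_app_nth)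
      ultimately show ?thesis by blast
    next
      case False
      note ynot = False
      show ?thesis
      proof (cases "F \<in> set Es")
        case True
        then obtain m where m: "m < length Es" "Es ! m = F" by (metis in_set_conv_nth)
        let ?Es = "take (Suc m) Es" and ?xs = "take (Suc m) xs @ [y]"
        have lt: "length (take (Suc m) xs) = Suc m" using m lx by simp
        have "bpath T ?Es ?xs"
          unfolding bpath_def
        proof (intro conjI allI impI)
          show "length ?xs = Suc (length ?Es)" using m lx by simp
          show "distinct ?Es" using dE by simp
          have "y \<notin> set (take (Suc m) xs)" using ynot set_take_subset by fast
          then show "distinct ?xs" using dx by simp
          show "set ?Es \<subseteq> T" using sE set_take_subset by fast
          fix i assume "i < length ?Es"
          then have i: "i \<le> m" using m by simp
          show "?xs ! i \<in> ?Es ! i"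
          proof -
            have "?xs ! i = xs ! i" using i lt by (simp add: nth_append)
            then show ?thesis using c[of i] i m by simp
          qed
          show "?xs ! Suc i \<in> ?Es ! i"
          proof (cases "i = m")
            case True
            then have "?xs ! Suc i = y" using lt by (simp add: nth_append)
            then show ?thesis using True m F by simp
          next
            case False
            then have "i < m" using i by simp
            then have "?xs ! Suc i = xs ! Suc i" using lt by (simp add: nth_append)
            then show ?thesis using c[of i] \<open>i < m\<close> m by simp
          qed
        qed
        moreover have "?xs ! 0 = x" using x0 lt by (simp add: nth_append)
        moreover have "last ?xs = y" by simp
        ultimately show ?thesis by blast
      next
        case False
        let ?Es = "Es @ [F]" and ?xs = "xs @ [y]"
        have "bpath T ?Es ?xs"
          unfolding bpath_def
        proof (intro conjI allI impI)
          show "length ?xs = Suc (length ?Es)" using lx by simp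
          show "distinct ?Es" using dE False by simp
          show "distinct ?xs" using dx ynot by simp
          show "set ?Es \<subseteq> T" using sE F by simp
          fix i assume "i < length ?Es"
          then have i: "i \<le> length Es" by simp
          show "?xs ! i \<in> ?Es ! i"
          proof (cases "i = length Es")
            case True
            then have "?xs ! i = z" using lz lx xne by (simp add: nth_append last_conv_nth)
            then show ?thesis using True F by simp
          next
            case False
            then have "i < length Es" using i by simp
            then show ?thesis using c[of i] lx by (simp add: nth_append)
          qed
          show "?xs ! Suc i \<in> ?Es ! i"
          proof (cases "i = length Es")
            case True
            then have "?xs ! Suc i = y" using lx by (simp add: nth_append)
            then show ?thesis using True F by simp
          next
            case False
            then have "i < length Es" using i by simp
            then show ?thesis using c[of i] lx by (simp add: nth_append)
          qed
        qed
        moreover have "?xs ! 0 = x" using x0 xne by (simp add: nth_append)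
        moreover have "last ?xs = y" by simp
        ultimately show ?thesis by blast
      qed
    qed
  qed
qed

lemma berge_insert_conv:
  assumes "berge_acyclic W (insert t T)" "t \<notin> T" "x \<in> t" "y \<in> t" "x \<noteq> y"
  shows "\<not> reachable (hyp_graph_edges T) x y"
proof
  assume "reachable (hyp_graph_edges T) x y"
  then obtain Es xs where bp: "bpath T Es xs" and x0: "xs ! 0 = x" and ly: "last xs = y"
    using berge_path by metis
  have lx: "length xs = Suc (length Es)" and dE: "distinct Es" and dx: "distinct xs" and sE: "set Es \<subseteq> T"
    and c: "\<And>i. i < length Es \<Longrightarrow> xs ! i \<in> Es ! i \<and> xs ! (Suc i) \<in> Es ! i"
    using bp unfolding bpath_def by auto
  let ?k = "length Es"
  have xne: "xs \<noteq> []" using lx by auto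
  have k1: "?k \<ge> 1"
  proof (rule ccontr)
    assume "\<not> ?k \<ge> 1"
    then have "?k = 0" by linarith
    then have "length xs = 1" using lx by simp
    then have "last xs = xs ! 0" using xne by (simp add: last_conv_nth)
    then show False using x0 ly assms(5) by simp
  qed
  have Esne: "Es \<noteq> []" using k1 by (cases Es) auto
  have lastk: "xs ! ?k = y" using ly lx xne by (simp add: last_conv_nth)
  let ?Es = "Es @ [t]" and ?xs = "tl xs @ [x]"
  have ltl: "length (tl xs) = ?k" using lx by simp
  have tln: "\<And>i. i < ?k \<Longrightarrow> tl xs ! i = xs ! Suc i" using ltl by (simp add: nth_tl)
  have "berge_cycle (insert t T) ?Es ?xs"
    unfolding berge_cycle_def
  proof (intro conjI allI impI)
    show "2 \<le> length ?Es" using k1 by simp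
    show "length ?xs = length ?Es" using ltl by simp
    show "distinct ?Es" using dE sE assms(2) by auto
    have "x = hd xs" using x0 xne by (simp add: hd_conv_nth)
    then have "x \<notin> set (tl xs)" using dx xne by (cases xs) auto
    then show "distinct ?xs" using dx by (simp add: distinct_tl)
    show "set ?Es \<subseteq> insert t T" using sE by auto
    fix i assume i: "i < length ?xs"
    show "?xs ! i \<in> ?Es ! i \<inter> ?Es ! ((i + 1) mod length ?Es)"
    proof (cases "i = ?k")
      case True
      have "?xs ! i = x" using True ltl by (simp add: nth_append)
      moreover have "?Es ! i = t" using True by simp
      moreover have "(i + 1) mod length ?Es = 0" using True by simp
      moreover have "?Es ! 0 = Es ! 0" using Esne by (simp add: nth_append)
      moreover have "x \<in> Es ! 0" using c[of 0] Esne x0 by simp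
      ultimately show ?thesis using assms(3) by simp
    next
      case False
      then have ik: "i < ?k" using i ltl by simp
      have xi: "?xs ! i = xs ! Suc i" using ik ltl tln by (simp add: nth_append)
      have e1: "?Es ! i = Es ! i" using ik by (simp add: nth_append)
      have "xs ! Suc i \<in> ?Es ! ((i + 1) mod length ?Es)"
      proof (cases "Suc i = ?k")
        case True
        then have "(i + 1) mod length ?Es = ?k" by simp
        then show ?thesis using True lastk assms(4) by simp
      next
        case False
        then have si: "Suc i < ?k" using ik by simp
        then have "(i + 1) mod length ?Es = Suc i" by simp
        then show ?thesis using c[OF si] si by (simp add: nth_append)
      qed
      then show ?thesis using xi e1 c[OF ik] by simp
    qed
  qed
  then show False using assms(1) unfolding berge_acyclic_def by blast
qed



lemma graph_finite_E: "graph V E \<Longrightarrow> finite E"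
proof -
  assume g: "graph V E"
  have "E \<subseteq> Pow V"
  proof
    fix e assume "e \<in> E"
    then obtain u v where "u \<in> V" "v \<in> V" "e = {u,v}" using g unfolding graph_def by meson
    then show "e \<in> Pow V" by simp
  qed
  moreover have "finite V" using g by (simp add: graph_def)
  ultimately show "finite E" using finite_subset by blast
qed

lemma graph_edge_V: "graph V E \<Longrightarrow> {a,b} \<in> E \<Longrightarrow> a \<in> V \<and> b \<in> V"
proof -
  assume g: "graph V E" "{a,b} \<in> E"
  then obtain u v where "u \<in> V" "v \<in> V" "{a,b} = {u,v}" using graph_edge by metis
  then show ?thesis by (metis doubleton_eq_iff)
qed

lemma exc_hyp:
  assumes fV: "finite V" and g: "graph V E" and "T \<subseteq> triangles E" "finite T" "berge_acyclic W T"
  shows "exc V (hyp_graph_edges T) = int (card T)"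
  using assms(4,3,5)
proof (induction T rule: finite_induct)
  case empty
  have "hyp_graph_edges {} = {}" unfolding hyp_graph_edges_def by simp
  then have "exc V (hyp_graph_edges {}) = 0" using exc_empty by metis
  then show ?case by simp
next
  case (insert t T)
  have ba: "berge_acyclic W T" using berge_acyclic_mono[OF insert(5)] by blast
  have IH: "exc V (hyp_graph_edges T) = int (card T)" using insert(3) insert(4) ba by simp
  obtain a b c where abc: "t = {a,b,c}" "a \<noteq> b" "b \<noteq> c" "a \<noteq> c" "{a,b} \<in> E" "{b,c} \<in> E" "{a,c} \<in> E"
    using triangleE insert(4) by blast
  have V: "a \<in> V" "b \<in> V" "c \<in> V" using graph_edge_V[OF g] abc by blast+
  let ?H = "hyp_graph_edges T"
  have fH: "finite ?H" using hyp_sub_E[of T E] insert(4) graph_finite_E[OF g] finite_subset by blast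
  have nr: "\<And>x y. x \<in> t \<Longrightarrow> y \<in> t \<Longrightarrow> x \<noteq> y \<Longrightarrow> \<not> reachable ?H x y"
    using berge_insert_conv[OF insert(5) insert(2)] by blast
  have nab: "\<not> reachable ?H a b" and nbc: "\<not> reachable ?H b c" and nac: "\<not> reachable ?H a c"
    using nr abc by auto
  have hins: "hyp_graph_edges (insert t T) = insert {a,c} (insert {b,c} (insert {a,b} ?H))"
    using hyp_insert[of t T] hyp_tri[OF abc(2,3,4)] abc(1) by auto
  let ?H1 = "insert {a,b} ?H"
  let ?H2 = "insert {b,c} ?H1"
  have e1: "exc V ?H1 = exc V ?H" using exc_insert_nreach[OF fV fH V(1,2) nab] .
  have nbc1: "\<not> reachable ?H1 b c"
  proof
    assume "reachable ?H1 b c"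
    then have "reachable ?H b c \<or> (reachable ?H b a \<and> reachable ?H b c) \<or> (reachable ?H b b \<and> reachable ?H a c)"
      by (simp add: reach_insert)
    then show False using nbc nac by blast
  qed
  have e2: "exc V ?H2 = exc V ?H1" using exc_insert_nreach[OF fV _ V(2,3) nbc1] fH by simp
  have rac: "reachable ?H2 a c"
  proof -
    have "reachable ?H2 a b" by (simp add: reach_edge)
    moreover have "reachable ?H2 b c" by (simp add: reach_edge)
    ultimately show ?thesis by (rule reach_trans)
  qed
  have acn: "{a,c} \<notin> ?H2"
  proof
    assume "{a,c} \<in> ?H2"
    moreover have "{a,c} \<noteq> {a,b}" using abc by (metis doubleton_eq_iff)
    moreover have "{a,c} \<noteq> {b,c}" using abc by (metis doubleton_eq_iff)
    ultimately have "{a,c} \<in> ?H" by simp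
    then show False using nac reach_edge by metis
  qed
  have e3: "exc V (insert {a,c} ?H2) = exc V ?H2 + 1" using exc_insert_reach[OF _ rac acn] fH by simp
  have "card (insert t T) = Suc (card T)" using insert(1,2) by simp
  then show ?case using hins e1 e2 e3 IH by simp
qed

lemma nt_bridge:
  assumes g: "graph V E" and ch: "chordal V E" and d: "{x,y} \<in> non_triangle_edges E"
    and K: "K \<subseteq> E" "{x,y} \<notin> K"
  shows "\<not> reachable K x y"
proof
  assume r: "reachable K x y"
  have dE: "{x,y} \<in> E" using d by (simp add: non_triangle_edges_def)
  have xy: "x \<noteq> y" using graph_edge_neq[OF g dE] .
  obtain ps where ps: "distinct ps" "pedges ps \<subseteq> K" "length ps \<ge> 3" "set ps \<subseteq> V"
    "cycle_edges ps = insert {x,y} (pedges ps)"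
    using path_cycle[OF xy r K(2) graph_edges_in[OF g K(1)]] by blast
  have "is_cycle V (insert {x,y} K) ps" using cycle_in_insert[OF ps(1,3,4,2,5)] .
  then have cyc: "is_cycle V E ps" using K(1) dE unfolding is_cycle_def by blast
  have "{x,y} \<in> cycle_edges ps" using ps(5) by simp
  then obtain t where "t \<in> triangles E" "{x,y} \<subseteq> t" using triangle_of_cycle[OF g ch cyc] by blast
  then show False using d by (auto simp: non_triangle_edges_def)
qed

lemma exc_nt_union:
  assumes fV: "finite V" and g: "graph V E" and ch: "chordal V E" and K: "K \<subseteq> E"
    and D: "D \<subseteq> non_triangle_edges E"
  shows "exc V (K \<union> D) = exc V K"
proof -
  have fE: "finite E" using graph_finite_E[OF g] .
  have nte: "non_triangle_edges E \<subseteq> E" unfolding non_triangle_edges_def by (rule Collect_subset)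
  have fD: "finite D" using D nte fE by (meson finite_subset subset_trans)
  show ?thesis
    using fD D
  proof (induction D rule: finite_induct)
    case empty then show ?case by simp
  next
    case (insert d D)
    have IH: "exc V (K \<union> D) = exc V K" using insert by simp
    have dn: "d \<in> non_triangle_edges E" using insert(4) by simp
    then have dE: "d \<in> E" by (simp add: non_triangle_edges_def)
    obtain x y where xy: "d = {x,y}" "x \<in> V" "y \<in> V" using graph_edge[OF g dE] by blast
    have KD: "K \<union> D \<subseteq> E" using K insert(4) nte by blast
    have fKD: "finite (K \<union> D)" using KD fE finite_subset by blast
    show ?case
    proof (cases "d \<in> K \<union> D")
      case True
      then have "K \<union> insert d D = K \<union> D" by blast
      then show ?thesis using IH by simp
    next
      case False
      then have "\<not> reachable (K \<union> D) x y" using nt_bridge[OF g ch _ KD] dn xy by simp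
      then have "exc V (insert {x,y} (K \<union> D)) = exc V (K \<union> D)" using exc_insert_nreach[OF fV fKD xy(2,3)] by simp
      then show ?thesis using IH xy by simp
    qed
  qed
qed

lemma join_step_inv:
  assumes fV: "finite V" and "join_step V E H H'" "H \<subseteq> E" "finite H"
  shows "H' \<subseteq> E \<and> finite H' \<and> exc V H' = exc V H"
proof -
  obtain u v where uv: "u \<in> V" "v \<in> V" "{u,v} \<in> E" "\<not> reachable H u v" "H' = insert {u,v} H"
    using assms(2) unfolding join_step_def by blast
  then show ?thesis using assms(3,4) exc_insert_nreach[OF fV assms(4) uv(1,2,4)] by simp
qed

lemma join_steps_inv:
  assumes fV: "finite V" and "(join_step V E)\<^sup>*\<^sup>* H X" "H \<subseteq> E" "finite H"
  shows "X \<subseteq> E \<and> finite X \<and> exc V X = exc V H"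
  using assms(2)
proof (induction rule: rtranclp_induct)
  case base then show ?case using assms(3,4) by simp
next
  case (step Y Z)
  then show ?case using join_step_inv[OF fV step(2)] by simp
qed

lemma find_cross_edge:
  assumes "reachable E u v" "\<not> reachable H u v"
  shows "\<exists>x y. {x,y} \<in> E \<and> reachable H u x \<and> \<not> reachable H u y"
proof -
  have "(u,v) \<in> (adj_rel E)\<^sup>*" using assms(1) by (simp add: reachable_def)
  then have "reachable H u v \<or> (\<exists>x y. {x,y} \<in> E \<and> reachable H u x \<and> \<not> reachable H u y)"
  proof (induction rule: rtrancl_induct)
    case base then show ?case by simp
  next
    case (step w z)
    have wz: "{w,z} \<in> E" using step(2) by (simp add: adj_rel_def)
    show ?case
    proof (cases "reachable H u w")
      case True
      show ?thesis
      proof (cases "reachable H u z")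
        case True then show ?thesis by simp
      next
        case False then show ?thesis using wz \<open>reachable H u w\<close> by blast
      qed
    next
      case False then show ?thesis using step(3) by blast
    qed
  qed
  then show ?thesis using assms(2) by blast
qed

lemma join_exists:
  assumes g: "graph V E" and c: "connected_graph V E" and "H \<subseteq> E"
  shows "\<exists>X. (join_step V E)\<^sup>*\<^sup>* H X \<and> connected_graph V X"
  using assms(3)
proof (induction "card (E - H)" arbitrary: H rule: less_induct)
  case less
  show ?case
  proof (cases "connected_graph V H")
    case True then show ?thesis by blast
  next
    case False
    have Vne: "V \<noteq> {}" using c by (simp add: connected_graph_def)
    obtain u v where uv: "u \<in> V" "v \<in> V" "\<not> reachable H u v" using not_connected_ex[OF Vne False] by blast
    have "reachable E u v" using c uv by (simp add: connected_graph_def)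
    then obtain x y where xy: "{x,y} \<in> E" "reachable H u x" "\<not> reachable H u y"
      using find_cross_edge[OF _ uv(3)] by meson
    have xyV: "x \<in> V" "y \<in> V" using graph_edge_V[OF g xy(1)] by auto
    have nr: "\<not> reachable H x y"
    proof
      assume "reachable H x y" then have "reachable H u y" using xy(2) reach_trans by metis
      then show False using xy(3) by simp
    qed
    have nH: "{x,y} \<notin> H" using nr reach_edge by metis
    have js: "join_step V E H (insert {x,y} H)"
      unfolding join_step_def using False xyV xy(1) nH nr by blast
    have fE: "finite E" using graph_finite_E[OF g] .
    have "card (E - insert {x,y} H) < card (E - H)"
    proof -
      have "E - insert {x,y} H = (E - H) - {{x,y}}" by blast
      moreover have "{x,y} \<in> E - H" using xy(1) nH by blast
      moreover have "finite (E - H)" using fE by simp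
      ultimately show ?thesis by (metis card_Diff1_less)
    qed
    moreover have "insert {x,y} H \<subseteq> E" using less.prems xy(1) by blast
    ultimately obtain X where "(join_step V E)\<^sup>*\<^sup>* (insert {x,y} H) X" "connected_graph V X"
      using less.hyps by blast
    then show ?thesis using js converse_rtranclp_into_rtranclp by metis
  qed
qed



lemma reach_closed:
  assumes "\<And>f x y. f \<in> F \<Longrightarrow> f = {x,y} \<Longrightarrow> x \<in> S \<Longrightarrow> y \<in> S" "reachable F x y" "x \<in> S"
  shows "y \<in> S"
proof -
  have "(x,y) \<in> (adj_rel F)\<^sup>*" using assms(2) by (simp add: reachable_def)
  then show ?thesis
  proof (induction rule: rtrancl_induct)
    case base then show ?case using assms(3) .
  next
    case (step y z)
    then have "{y,z} \<in> F" by (simp add: adj_rel_def)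
    then show ?case using assms(1) step(3) by blast
  qed
qed

lemma tri_rename:
  assumes "t = {a,b,c}" "a \<noteq> b" "b \<noteq> c" "a \<noteq> c" "p \<in> t" "q \<in> t" "p \<noteq> q"
  shows "\<exists>r. t = {p,q,r} \<and> r \<noteq> p \<and> r \<noteq> q"
proof -
  have "p \<in> {a,b,c}" "q \<in> {a,b,c}" using assms by auto
  then show ?thesis using assms(1-4,7) by (auto simp: insert_commute)
qed

lemma hyp_single:
  "f \<in> hyp_graph_edges {t} \<Longrightarrow> \<exists>u v. f = {u,v} \<and> u \<noteq> v \<and> u \<in> t \<and> v \<in> t"
  unfolding hyp_mem by blast

lemma X_bridge:
  assumes fV: "finite V" and g: "graph V E"
    and T: "T \<subseteq> triangles E" "finite T" "berge_acyclic W T"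
    and X: "X \<subseteq> E" "finite X" "hyp_graph_edges T \<subseteq> X" "exc V X = int (card T)"
    and h: "{p,q} \<in> X" "{p,q} \<notin> hyp_graph_edges T"
  shows "\<not> reachable (X - {{p,q}}) p q"
proof
  assume r: "reachable (X - {{p,q}}) p q"
  have fX': "finite (X - {{p,q}})" using X(2) by simp
  have "exc V (insert {p,q} (X - {{p,q}})) = exc V (X - {{p,q}}) + 1"
    using exc_insert_reach[OF fX' r] by simp
  moreover have "insert {p,q} (X - {{p,q}}) = X" using h(1) by blast
  moreover have "exc V (hyp_graph_edges T) \<le> exc V (X - {{p,q}})"
  proof -
    have s1: "hyp_graph_edges T \<subseteq> X - {{p,q}}" using X(3) h(2) by blast
    have "X - {{p,q}} \<subseteq> E" using X(1) by blast
    then have s2: "edges_in V (X - {{p,q}})" by (rule graph_edges_in[OF g])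
    show ?thesis by (rule exc_mono[OF fV fX' s1 s2])
  qed
  moreover have "exc V (hyp_graph_edges T) = int (card T)" using exc_hyp[OF fV g T] .
  ultimately show False using X(4) by simp
qed

lemma X_tri_sep:
  assumes fV: "finite V" and g: "graph V E"
    and T: "T \<subseteq> triangles E" "finite T" "berge_acyclic W T"
    and X: "X \<subseteq> E" "finite X" "hyp_graph_edges T \<subseteq> X" "exc V X = int (card T)"
    and t: "t \<in> T" "t = {a,b,c}" "a \<noteq> b" "b \<noteq> c" "a \<noteq> c"
  shows "\<not> reachable (X - hyp_graph_edges {t}) a b"
proof
  let ?W = "X - hyp_graph_edges {t}"
  assume r: "reachable ?W a b"
  have ht: "hyp_graph_edges {t} = {{a,b},{b,c},{a,c}}" using hyp_tri[OF t(3,4,5)] t(2) by simp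
  have fW: "finite ?W" using X(2) by simp
  have "?W \<subseteq> E" using X(1) by blast
  then have inW: "edges_in V ?W" by (rule graph_edges_in[OF g])
  have sub: "hyp_graph_edges (T - {t}) \<subseteq> ?W"
  proof
    fix f assume f: "f \<in> hyp_graph_edges (T - {t})"
    then have "f \<in> X" using hyp_mono[of "T - {t}" T] X(3) by blast
    moreover have "f \<notin> hyp_graph_edges {t}"
    proof
      assume "f \<in> hyp_graph_edges {t}"
      then obtain u v where uv: "f = {u,v}" "u \<noteq> v" "u \<in> t" "v \<in> t" using hyp_single by blast
      obtain u' v' e where e: "f = {u',v'}" "u' \<noteq> v'" "e \<in> T - {t}" "u' \<in> e" "v' \<in> e"
        using f unfolding hyp_mem by blast
      have "u \<in> e" "v \<in> e" using uv(1) e(1,4,5) by (metis doubleton_eq_iff)+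
      then have "e = t" using berge_two[OF T(3) _ t(1) uv(2)] e(3) uv(3,4) by blast
      then show False using e(3) by simp
    qed
    ultimately show "f \<in> ?W" by simp
  qed
  have T': "T - {t} \<subseteq> triangles E" "finite (T - {t})" "berge_acyclic W (T - {t})"
    using T berge_acyclic_mono[OF T(3)] by auto
  have "exc V (hyp_graph_edges (T - {t})) = int (card (T - {t}))" using exc_hyp[OF fV g T'] .
  moreover have "int (card (T - {t})) = int (card T) - 1"
  proof -
    have "card T > 0" using t(1) T(2) card_gt_0_iff by blast
    then show ?thesis using t(1) T(2) by (simp add: card_Diff_singleton of_nat_diff)
  qed
  moreover have "exc V (hyp_graph_edges (T - {t})) \<le> exc V ?W" using exc_mono[OF fV fW sub inW] .
  ultimately have eW: "exc V ?W \<ge> int (card T) - 1" by simp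
  have V: "a \<in> V" "b \<in> V" "c \<in> V"
    using graph_edge_V[OF g] hyp_sub_E[OF T(1)] hyp_mono[of "{t}" T] t(1) ht by blast+
  let ?W1 = "insert {a,b} ?W"
  let ?W2 = "insert {b,c} ?W1"
  have ab: "{a,b} \<notin> ?W" using ht by simp
  have e1: "exc V ?W1 = exc V ?W + 1" using exc_insert_reach[OF fW r ab] .
  have e2: "exc V ?W1 \<le> exc V ?W2" using exc_insert_ge[OF fV _ V(2,3)] fW by simp
  have rac: "reachable ?W2 a c"
  proof -
    have "reachable ?W2 a b" by (simp add: reach_edge)
    moreover have "reachable ?W2 b c" by (simp add: reach_edge)
    ultimately show ?thesis by (rule reach_trans)
  qed
  have acn: "{a,c} \<notin> ?W2"
  proof -
    have "{a,c} \<noteq> {a,b}" using t by (metis doubleton_eq_iff)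
    moreover have "{a,c} \<noteq> {b,c}" using t by (metis doubleton_eq_iff)
    moreover have "{a,c} \<notin> ?W" using ht by simp
    ultimately show ?thesis by simp
  qed
  have e3: "exc V (insert {a,c} ?W2) = exc V ?W2 + 1" using exc_insert_reach[OF _ rac acn] fW by simp
  have "hyp_graph_edges {t} \<subseteq> X" using hyp_mono[of "{t}" T] t(1) X(3) by blast
  then have "insert {a,c} ?W2 = X" using ht by blast
  then show False using e1 e2 e3 eW X(4) by simp
qed

lemma X_cycle_tri:
  assumes fV: "finite V" and g: "graph V E"
    and T: "T \<subseteq> triangles E" "finite T" "berge_acyclic W T"
    and X: "X \<subseteq> E" "finite X" "hyp_graph_edges T \<subseteq> X" "exc V X = int (card T)"
    and zs: "is_cycle V X zs" "e \<in> cycle_edges zs"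
  shows "\<exists>t\<in>T. cycle_edges zs = hyp_graph_edges {t}"
proof -
  let ?K = "cycle_edges zs"
  have KX: "?K \<subseteq> X" using zs(1) by (simp add: is_cycle_def)
  then have eX: "e \<in> X" using zs(2) by blast
  obtain p q where pq: "p \<noteq> q" "e = {p,q}" using graph_edge[OF g] eX X(1) by blast
  have "reachable (?K - {{p,q}}) p q" using cycle_around[OF zs(1)] zs(2) pq(2) by simp
  moreover have "?K - {{p,q}} \<subseteq> X - {{p,q}}" using KX by blast
  ultimately have "reachable (X - {{p,q}}) p q" by (rule reach_mono)
  then have "e \<in> hyp_graph_edges T" using X_bridge[OF fV g T X, of p q] eX pq(2) by blast
  then obtain u v t where uv: "e = {u,v}" "u \<noteq> v" "t \<in> T" "u \<in> t" "v \<in> t" unfolding hyp_mem by blast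
  obtain a' b' c' where abc': "t = {a',b',c'}" "a' \<noteq> b'" "b' \<noteq> c'" "a' \<noteq> c'"
    using triangleE T(1) uv(3) by blast
  obtain c where c: "t = {u,v,c}" "c \<noteq> u" "c \<noteq> v" using tri_rename[OF abc' uv(4,5,2)] by blast
  define a where "a = u"
  define b where "b = v"
  have tabc: "t = {a,b,c}" "a \<noteq> b" "b \<noteq> c" "a \<noteq> c" using c uv(2) by (auto simp: a_def b_def)
  have gab: "e = {a,b}" using uv(1) by (simp add: a_def b_def)
  let ?W = "X - hyp_graph_edges {t}"
  have ht: "hyp_graph_edges {t} = {{a,b},{b,c},{a,c}}" using hyp_tri[OF tabc(2,3,4)] tabc(1) by simp
  have s_ab: "\<not> reachable ?W a b" using X_tri_sep[OF fV g T X uv(3) tabc] .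
  have s_bc: "\<not> reachable ?W b c"
    using X_tri_sep[OF fV g T X uv(3), of b c a] tabc by (auto simp: insert_commute)
  have s_ac: "\<not> reachable ?W a c"
    using X_tri_sep[OF fV g T X uv(3), of a c b] tabc by (auto simp: insert_commute)
  have WX: "\<And>f. f \<in> X \<Longrightarrow> f \<notin> ?W \<Longrightarrow> f = {a,b} \<or> f = {b,c} \<or> f = {a,c}" using ht by auto
  have Wcl: "\<And>f x y z. f \<in> ?W \<Longrightarrow> f = {x,y} \<Longrightarrow> reachable ?W z x \<Longrightarrow> reachable ?W z y"
  proof -
    fix f x y z assume "f \<in> ?W" "f = {x,y}" "reachable ?W z x"
    then have "reachable ?W x y" using reach_edge by metis
    then show "reachable ?W z y" using \<open>reachable ?W z x\<close> reach_trans by metis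
  qed
  have rab: "reachable (?K - {{a,b}}) a b" using cycle_around[OF zs(1)] zs(2) gab by simp
  have ac_in: "{a,c} \<in> ?K"
  proof (rule ccontr)
    assume nac: "{a,c} \<notin> ?K"
    let ?S = "{w. reachable ?W a w}"
    have cl: "y \<in> ?S" if f: "f \<in> ?K - {{a,b}}" "f = {x,y}" "x \<in> ?S" for f x y
    proof (cases "f \<in> ?W")
      case True then show ?thesis using Wcl[OF True f(2)] f(3) by simp
    next
      case False
      then have "f = {a,b} \<or> f = {b,c} \<or> f = {a,c}" using WX f(1) KX by blast
      then have "f = {b,c}" using f(1) nac by auto
      then have "x = b \<or> x = c" using f(2) by (metis doubleton_eq_iff)
      then show ?thesis using f(3) s_ab s_ac by auto
    qed
    have "b \<in> ?S" using reach_closed[of "?K - {{a,b}}" ?S, OF _ rab] cl by simp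
    then show False using s_ab by simp
  qed
  have bc_in: "{b,c} \<in> ?K"
  proof (rule ccontr)
    assume nbc: "{b,c} \<notin> ?K"
    let ?S = "{w. reachable ?W b w}"
    have rba: "reachable (?K - {{a,b}}) b a" using rab reach_sym by metis
    have cl: "y \<in> ?S" if f: "f \<in> ?K - {{a,b}}" "f = {x,y}" "x \<in> ?S" for f x y
    proof (cases "f \<in> ?W")
      case True then show ?thesis using Wcl[OF True f(2)] f(3) by simp
    next
      case False
      then have "f = {a,b} \<or> f = {b,c} \<or> f = {a,c}" using WX f(1) KX by blast
      then have "f = {a,c}" using f(1) nbc by auto
      then have "x = a \<or> x = c" using f(2) by (metis doubleton_eq_iff)
      moreover have "\<not> reachable ?W b a" using s_ab reach_sym by metis
      moreover have "\<not> reachable ?W b c" using s_bc by simp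
      ultimately show ?thesis using f(3) by auto
    qed
    have "a \<in> ?S" using reach_closed[of "?K - {{a,b}}" ?S, OF _ rba] cl by simp
    then show False using s_ab reach_sym by fastforce
  qed
  have ab_in: "{a,b} \<in> ?K" using zs(2) gab by simp
  have setz: "a \<in> set zs" "b \<in> set zs" "c \<in> set zs"
    using cycle_edge_sub_set[OF ab_in] cycle_edge_sub_set[OF bc_in] by auto
  have nab_ac: "{a,b} \<noteq> {a,c}" using tabc by (metis doubleton_eq_iff)
  have nab_bc: "{a,b} \<noteq> {b,c}" using tabc by (metis doubleton_eq_iff)
  have nac_bc: "{a,c} \<noteq> {b,c}" using tabc by (metis doubleton_eq_iff)
  have da: "f = {a,b} \<or> f = {a,c}" if "f \<in> ?K" "a \<in> f" for f
    using cycle_degree2[OF zs(1) setz(1) ab_in ac_in that(1)] that(2) nab_ac by auto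
  have db: "f = {a,b} \<or> f = {b,c}" if "f \<in> ?K" "b \<in> f" for f
    using cycle_degree2[OF zs(1) setz(2) ab_in bc_in that(1)] that(2) nab_bc by auto
  have dc: "f = {a,c} \<or> f = {b,c}" if "f \<in> ?K" "c \<in> f" for f
    using cycle_degree2[OF zs(1) setz(3) ac_in bc_in that(1)] that(2) nac_bc by auto
  let ?S = "{a,b,c}"
  have cl: "y \<in> ?S" if "f \<in> ?K" "f = {x,y}" "x \<in> ?S" for f x y
  proof -
    have "x \<in> f" using that(2) by simp
    then have "f = {a,b} \<or> f = {a,c} \<or> f = {b,c}" using that(1,3) da db dc by blast
    then show ?thesis using that(2) by (auto simp: doubleton_eq_iff)
  qed
  have allS: "w \<in> ?S" if "w \<in> set zs" for w
    using reach_closed[of ?K ?S, OF _ cycle_connected[OF zs(1) setz(1) that]] cl by simp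
  have "?K \<subseteq> hyp_graph_edges {t}"
  proof
    fix f assume f: "f \<in> ?K"
    then obtain x y where xy: "x \<noteq> y" "f = {x,y}" using graph_edge[OF g] KX X(1) by blast
    have "x \<in> set zs" "y \<in> set zs" using cycle_edge_sub_set[OF f] xy(2) by auto
    then have "x \<in> t" "y \<in> t" using allS tabc(1) by auto
    then show "f \<in> hyp_graph_edges {t}" using hyp_edge[OF xy(1), of t "{t}"] xy(2) by simp
  qed
  moreover have "hyp_graph_edges {t} \<subseteq> ?K" using ht ab_in bc_in ac_in by simp
  ultimately show ?thesis using uv(3) by blast
qed

lemma X_cactus_like:
  assumes fV: "finite V" and g: "graph V E"
    and T: "T \<subseteq> triangles E" "finite T" "berge_acyclic W T"
    and X: "X \<subseteq> E" "finite X" "hyp_graph_edges T \<subseteq> X" "exc V X = int (card T)"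
  shows "\<forall>e\<in>X. \<forall>xs ys. is_cycle V X xs \<and> is_cycle V X ys \<and> e \<in> cycle_edges xs \<and> e \<in> cycle_edges ys
           \<longrightarrow> cycle_edges xs = cycle_edges ys"
proof (intro ballI allI impI)
  fix e xs ys
  assume e: "e \<in> X" and c: "is_cycle V X xs \<and> is_cycle V X ys \<and> e \<in> cycle_edges xs \<and> e \<in> cycle_edges ys"
  obtain t1 where t1: "t1 \<in> T" "cycle_edges xs = hyp_graph_edges {t1}"
    using X_cycle_tri[OF fV g T X] c by blast
  obtain t2 where t2: "t2 \<in> T" "cycle_edges ys = hyp_graph_edges {t2}"
    using X_cycle_tri[OF fV g T X] c by blast
  obtain p q where pq: "p \<noteq> q" "e = {p,q}" using graph_edge[OF g] e X(1) by blast
  obtain u v where uv: "e = {u,v}" "u \<noteq> v" "u \<in> t1" "v \<in> t1" using hyp_single c t1(2) by metis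
  obtain u' v' where uv': "e = {u',v'}" "u' \<noteq> v'" "u' \<in> t2" "v' \<in> t2" using hyp_single c t2(2) by metis
  have "p \<in> t1" "q \<in> t1" using uv pq by (metis doubleton_eq_iff)+
  moreover have "p \<in> t2" "q \<in> t2" using uv' pq by (metis doubleton_eq_iff)+
  ultimately have "t1 = t2" using berge_two[OF T(3) t1(1) t2(1) pq(1)] by blast
  then show "cycle_edges xs = cycle_edges ys" using t1 t2 by simp
qed



definition cactus_like :: "'a set \<Rightarrow> 'a set set \<Rightarrow> bool" where
  "cactus_like V H \<longleftrightarrow> (\<forall>e\<in>H. \<forall>xs ys. is_cycle V H xs \<and> is_cycle V H ys \<and>
        e \<in> cycle_edges xs \<and> e \<in> cycle_edges ys \<longrightarrow> cycle_edges xs = cycle_edges ys)"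

definition Cyc :: "'a set \<Rightarrow> 'a set set \<Rightarrow> 'a set set" where
  "Cyc V H = {f\<in>H. \<exists>xs. is_cycle V H xs \<and> f \<in> cycle_edges xs}"

lemma is_cycle_mono: "is_cycle V H xs \<Longrightarrow> H \<subseteq> H' \<Longrightarrow> is_cycle V H' xs"
  unfolding is_cycle_def by blast

lemma cactus_like_sub: "cactus_like V H' \<Longrightarrow> H \<subseteq> H' \<Longrightarrow> cactus_like V H"
  unfolding cactus_like_def using is_cycle_mono by blast

lemma Cyc_mono: "H \<subseteq> H' \<Longrightarrow> Cyc V H \<subseteq> Cyc V H'"
  unfolding Cyc_def using is_cycle_mono by blast

lemma Cyc_sub: "Cyc V H \<subseteq> H"
  unfolding Cyc_def by blast

lemma not_in_drop:
  assumes "distinct ps" "i < length ps"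
  shows "ps ! i \<notin> set (drop (Suc i) ps)"
proof
  assume "ps ! i \<in> set (drop (Suc i) ps)"
  then obtain k where k: "k < length (drop (Suc i) ps)" "drop (Suc i) ps ! k = ps ! i" by (metis in_set_conv_nth)
  then have "ps ! (Suc i + k) = ps ! i" "Suc i + k < length ps" by auto
  then have "Suc i + k = i" using nth_eq_iff_index_eq[OF assms(1)] assms(2) by metis
  then show False by simp
qed

lemma upper_bound:
  assumes fV: "finite V" and g: "graph V E" and ch: "chordal V E"
    and "finite H" "H \<subseteq> E" "cactus_like V H"
  shows "\<exists>T. T \<subseteq> triangles E \<and> finite T \<and> berge_acyclic V T \<and> exc V H \<le> int (card T) \<and>
           (\<forall>x y. reachable (hyp_graph_edges T) x y \<longrightarrow> reachable (Cyc V H) x y)"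
  using assms(4,5,6)
proof (induction H rule: finite_induct)
  case empty
  have "hyp_graph_edges {} = {}" unfolding hyp_graph_edges_def by simp
  moreover have "exc V {} = 0" by (rule exc_empty)
  moreover have "berge_acyclic V {}" unfolding berge_acyclic_def berge_cycle_def by auto
  ultimately show ?case using reach_empty by (metis empty_subsetI finite.emptyI card.empty of_nat_0 order_refl reach_refl)
next
  case (insert f H)
  let ?H' = "insert f H"
  have HE: "H \<subseteq> E" using insert(4) by simp
  have cl: "cactus_like V H" using cactus_like_sub[OF insert(5)] by blast
  obtain T where T: "T \<subseteq> triangles E" "finite T" "berge_acyclic V T" "exc V H \<le> int (card T)"
    and inv: "\<And>x y. reachable (hyp_graph_edges T) x y \<Longrightarrow> reachable (Cyc V H) x y"
    using insert(3)[OF HE cl] by blast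
  have fE: "f \<in> E" using insert(4) by simp
  obtain u v where uv: "u \<noteq> v" "u \<in> V" "v \<in> V" "f = {u,v}" using graph_edge[OF g fE] by blast
  have CycM: "Cyc V H \<subseteq> Cyc V ?H'" by (rule Cyc_mono) blast
  show ?case
  proof (cases "reachable H u v")
    case False
    have "exc V ?H' = exc V H" using exc_insert_nreach[OF fV insert(1) uv(2,3) False] uv(4) by simp
    moreover have "reachable (Cyc V ?H') x y" if "reachable (hyp_graph_edges T) x y" for x y
    proof -
      have "reachable (Cyc V H) x y" using inv[OF that] .
      then show ?thesis using CycM by (rule reach_mono)
    qed
    ultimately show ?thesis using T by (metis order_refl)
  next
    case True
    have fnH: "{u,v} \<notin> H" using insert(2) uv(4) by simp
    have eiH: "edges_in V H" by (rule graph_edges_in[OF g HE])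
    obtain ps where ps: "distinct ps" "hd ps = u" "last ps = v" "pedges ps \<subseteq> H" "length ps \<ge> 3"
      "set ps \<subseteq> V" "cycle_edges ps = insert {u,v} (pedges ps)"
      using path_cycle[OF uv(1) True fnH eiH] by blast
    have cyc': "is_cycle V ?H' ps" using cycle_in_insert[OF ps(1,5,6,4,7)] uv(4) by simp
    have fin: "f \<in> cycle_edges ps" using ps(7) uv(4) by simp
    have NC: "g \<notin> Cyc V H" if "g \<in> pedges ps" for g
    proof
      assume "g \<in> Cyc V H"
      then obtain zs where zs: "is_cycle V H zs" "g \<in> cycle_edges zs" "g \<in> H" unfolding Cyc_def by blast
      have zs': "is_cycle V ?H' zs" using is_cycle_mono[OF zs(1)] by blast
      have "g \<in> cycle_edges ps" using that ps(7) by simp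
      then have "cycle_edges zs = cycle_edges ps"
        using insert(5) zs' cyc' zs(2,3) unfolding cactus_like_def by blast
      then have "f \<in> cycle_edges zs" using fin by simp
      then have "f \<in> H" using zs(1) unfolding is_cycle_def by blast
      then show False using insert(2) by simp
    qed
    have cycE: "is_cycle V E ps" using is_cycle_mono[OF cyc'] insert(4) by blast
    obtain t where t: "t \<in> triangles E" "f \<subseteq> t" "t \<subseteq> set ps" using triangle_of_cycle[OF g ch cycE fin] by blast
    have Qlt: "\<not> reachable (Cyc V H) (ps ! i) (ps ! j)" if ij: "i < j" "j < length ps" for i j
    proof
      assume r: "reachable (Cyc V H) (ps ! i) (ps ! j)"
      let ?g = "{ps ! i, ps ! Suc i}"
      have gp: "?g \<in> pedges ps" using ij by (auto simp: pedges_nth)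
      have gH: "?g \<in> H" using gp ps(4) by blast
      have "Cyc V H \<subseteq> H - {?g}" using Cyc_sub NC[OF gp] by blast
      then have r1: "reachable (H - {?g}) (ps ! i) (ps ! j)" using r by (metis reach_mono)
      let ?d = "drop (Suc i) ps"
      have pd: "pedges ?d \<subseteq> H - {?g}"
      proof
        fix h assume h: "h \<in> pedges ?d"
        then have "h \<in> H" using pedges_mono_drop ps(4) by blast
        moreover have "h \<noteq> ?g"
        proof
          assume "h = ?g"
          then have "ps ! i \<in> set ?d" using pedges_subset_set[OF h] by blast
          then show False using not_in_drop[OF ps(1)] ij by simp
        qed
        ultimately show "h \<in> H - {?g}" by simp
      qed
      have hdd: "hd ?d = ps ! Suc i" using ij by (simp add: hd_drop_conv_nth)
      have jd: "ps ! j \<in> set ?d"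
      proof -
        have "?d ! (j - Suc i) = ps ! j" using ij by simp
        moreover have "j - Suc i < length ?d" using ij by simp
        ultimately show ?thesis by (metis nth_mem)
      qed
      have r2: "reachable (H - {?g}) (ps ! Suc i) (ps ! j)" using reach_path[OF pd jd] hdd by simp
      have r3: "reachable (H - {?g}) (ps ! i) (ps ! Suc i)" using r1 r2 reach_sym reach_trans by metis
      have neq: "ps ! i \<noteq> ps ! Suc i" using ps(1) ij nth_eq_iff_index_eq by fastforce
      have "edges_in V (H - {?g})" using eiH unfolding edges_in_def by blast
      then obtain qs where qs: "distinct qs" "pedges qs \<subseteq> H - {?g}" "length qs \<ge> 3" "set qs \<subseteq> V"
        "cycle_edges qs = insert ?g (pedges qs)"
        using path_cycle[OF neq r3, of V] by blast
      have "is_cycle V (insert ?g (H - {?g})) qs" using cycle_in_insert[OF qs(1,3,4,2,5)] .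
      moreover have "insert ?g (H - {?g}) = H" using gH by blast
      ultimately have "is_cycle V H qs" by simp
      then have "?g \<in> Cyc V H" using gH qs(5) unfolding Cyc_def by blast
      then show False using NC[OF gp] by simp
    qed
    have Q: "\<not> reachable (Cyc V H) x y" if xps: "x \<in> set ps" and yps: "y \<in> set ps" and xy: "x \<noteq> y" for x y
    proof -
      have "\<exists>i. i < length ps \<and> ps ! i = x" using xps by (simp add: in_set_conv_nth)
      then obtain i where i: "i < length ps" "ps ! i = x" by blast
      have "\<exists>j. j < length ps \<and> ps ! j = y" using yps by (simp add: in_set_conv_nth)
      then obtain j where j: "j < length ps" "ps ! j = y" by blast
      have "i \<noteq> j" using i j xy by blast
      show ?thesis
      proof (cases "i < j")
        case True then show ?thesis using Qlt[OF True j(1)] i j by simp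
      next
        case False
        then have "j < i" using \<open>i \<noteq> j\<close> by simp
        then have "\<not> reachable (Cyc V H) (ps ! j) (ps ! i)" using Qlt[OF _ i(1)] by blast
        then have "\<not> reachable (Cyc V H) y x" using i j by simp
        then show ?thesis using reach_sym by metis
      qed
    qed
    have nr: "\<not> reachable (hyp_graph_edges T) x y" if "x \<in> t" "y \<in> t" "x \<noteq> y" for x y
      using Q[of x y] that t(3) inv by blast
    have tn: "t \<notin> T"
    proof
      assume tT: "t \<in> T"
      obtain a b c where abc: "t = {a,b,c}" "a \<noteq> b" "b \<noteq> c" "a \<noteq> c" using triangleE t(1) by blast
      have "{a,b} \<in> hyp_graph_edges T" using hyp_edge[OF abc(2) tT] abc(1) by simp
      then have "reachable (hyp_graph_edges T) a b" by (rule reach_edge)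
      then show False using nr[of a b] abc by simp
    qed
    have ba: "berge_acyclic V (insert t T)" using berge_insert[OF T(3) tn nr] by blast
    have "exc V ?H' = exc V H + 1" using exc_insert_reach[OF insert(1) True fnH] uv(4) by simp
    moreover have "card (insert t T) = Suc (card T)" using tn T(2) by simp
    moreover have "reachable (Cyc V ?H') x y" if "reachable (hyp_graph_edges (insert t T)) x y" for x y
    proof (rule reach_sub[OF _ that])
      fix p q assume pq: "{p,q} \<in> hyp_graph_edges (insert t T)"
      show "reachable (Cyc V ?H') p q"
      proof (cases "{p,q} \<in> hyp_graph_edges T")
        case True
        then have "reachable (Cyc V H) p q" using inv reach_edge by metis
        then show ?thesis using CycM by (rule reach_mono)
      next
        case False
        then have "{p,q} \<in> hyp_graph_edges {t}" using pq hyp_insert by blast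
        then obtain a b where ab: "{p,q} = {a,b}" "a \<in> t" "b \<in> t" using hyp_single by blast
        have pt: "p \<in> set ps" "q \<in> set ps" using ab t(3) by (metis doubleton_eq_iff subsetD)+
        have "pedges ps \<subseteq> Cyc V ?H'"
        proof
          fix h assume h: "h \<in> pedges ps"
          then have "h \<in> cycle_edges ps" using ps(7) by simp
          moreover have "h \<in> ?H'" using h ps(4) by blast
          ultimately show "h \<in> Cyc V ?H'" using cyc' unfolding Cyc_def by blast
        qed
        then show ?thesis using reach_path2 pt by metis
      qed
    qed
    moreover have "insert t T \<subseteq> triangles E" using T(1) t(1) by simp
    moreover have "finite (insert t T)" using T(2) by simp
    ultimately show ?thesis using ba T(4) by (metis add.commute of_nat_Suc add_right_mono)
  qed
qed



lemma tri_sub_V: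
  assumes g: "graph V E" and t: "t \<in> triangles E"
  shows "t \<subseteq> V \<and> t \<noteq> {}"
proof -
  obtain a b c where abc: "t = {a,b,c}" "{a,b} \<in> E" "{b,c} \<in> E" "{a,c} \<in> E" using triangleE[OF t] by blast
  have "a \<in> V" "b \<in> V" "c \<in> V" using graph_edge_V[OF g] abc(2,3) by blast+
  then show ?thesis using abc(1) by simp
qed

lemma join_steps_sup:
  assumes "(join_step V E)\<^sup>*\<^sup>* H X"
  shows "H \<subseteq> X"
  using assms
proof (induction rule: rtranclp_induct)
  case base then show ?case by simp
next
  case (step Y Z)
  then show ?case unfolding join_step_def by blast
qed

theorem mainTheorem10:
  fixes V :: "'a set" and E :: "'a set set" and V' :: "'a set" and \<E>' :: "'a set set"
  assumes "graph V E"
    and "connected_graph V E"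
    and "chordal V E"
    and "subhypergraph V' \<E>' V (triangles E)"
    and "berge_acyclic V' \<E>'"
    and "\<forall>W \<F>. subhypergraph W \<F> V (triangles E) \<and> berge_acyclic W \<F> \<longrightarrow> card \<F> \<le> card \<E>'"
  defines "E' \<equiv> hyp_graph_edges \<E>' \<union> non_triangle_edges E"
  shows "(\<exists>X. (join_step V E)\<^sup>*\<^sup>* E' X \<and> connected_graph V X) \<and>
         (\<forall>X. (join_step V E)\<^sup>*\<^sup>* E' X \<and> connected_graph V X \<longrightarrow> max_spanning_cactus V E X)"
proof -
  note g = assms(1) and c = assms(2) and ch = assms(3) and sh = assms(4) and ba = assms(5) and mx = assms(6)
  have fV: "finite V" using g by (simp add: graph_def)
  have fE: "finite E" using graph_finite_E[OF g] .
  have Tsub: "\<E>' \<subseteq> triangles E" using sh by (simp add: subhypergraph_def)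
  have fT: "finite \<E>'"
  proof -
    have hg: "hypergraph V' \<E>'" using sh by (simp add: subhypergraph_def)
    then have "\<E>' \<subseteq> Pow V'" unfolding hypergraph_def by blast
    moreover have "finite V'" using hg by (simp add: hypergraph_def)
    ultimately show ?thesis using finite_subset by blast
  qed
  have nte: "non_triangle_edges E \<subseteq> E" unfolding non_triangle_edges_def by (rule Collect_subset)
  have E'E: "E' \<subseteq> E" unfolding E'_def using hyp_sub_E[OF Tsub] nte by blast
  have fE': "finite E'" using E'E fE finite_subset by blast
  have excE': "exc V E' = int (card \<E>')"
  proof -
    have "exc V E' = exc V (hyp_graph_edges \<E>')"
      unfolding E'_def by (rule exc_nt_union[OF fV g ch hyp_sub_E[OF Tsub] order_refl])
    also have "\<dots> = int (card \<E>')" by (rule exc_hyp[OF fV g Tsub fT ba])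
    finally show ?thesis .
  qed
  have part1: "\<exists>X. (join_step V E)\<^sup>*\<^sup>* E' X \<and> connected_graph V X"
    by (rule join_exists[OF g c E'E])
  have part2: "max_spanning_cactus V E X" if X: "(join_step V E)\<^sup>*\<^sup>* E' X" "connected_graph V X" for X
  proof -
    have inv: "X \<subseteq> E" "finite X" "exc V X = exc V E'" using join_steps_inv[OF fV X(1) E'E fE'] by auto
    have hX: "hyp_graph_edges \<E>' \<subseteq> X" using join_steps_sup[OF X(1)] unfolding E'_def by blast
    have excX: "exc V X = int (card \<E>')" using inv(3) excE' by simp
    have cl: "\<forall>e\<in>X. \<forall>xs ys. is_cycle V X xs \<and> is_cycle V X ys \<and> e \<in> cycle_edges xs \<and> e \<in> cycle_edges ys
           \<longrightarrow> cycle_edges xs = cycle_edges ys"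
      by (rule X_cactus_like[OF fV g Tsub fT ba inv(1,2) hX excX])
    have scs: "spanning_cactus_subgraph V E X"
      unfolding spanning_cactus_subgraph_def cactus_def using inv(1) X(2) cl by blast
    have cardX: "int (card X) = int (card V) - 1 + int (card \<E>')"
      using connected_card[OF fV X(2) inv(2)] excX by simp
    have "card C' \<le> card X" if C': "spanning_cactus_subgraph V E C'" for C'
    proof -
      have CE: "C' \<subseteq> E" and cC: "connected_graph V C'" and clC: "cactus_like V C'"
        using C' unfolding spanning_cactus_subgraph_def cactus_def cactus_like_def by auto
      have fC: "finite C'" using CE fE finite_subset by blast
      obtain T' where T': "T' \<subseteq> triangles E" "finite T'" "berge_acyclic V T'" "exc V C' \<le> int (card T')"
        using upper_bound[OF fV g ch fC CE clC] by blast
      have "hypergraph V T'" unfolding hypergraph_def using fV tri_sub_V[OF g] T'(1) by blast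
      then have "subhypergraph V T' V (triangles E)" unfolding subhypergraph_def using T'(1) by blast
      then have "card T' \<le> card \<E>'" using mx T'(3) by blast
      moreover have "int (card C') = int (card V) - 1 + exc V C'" using connected_card[OF fV cC fC] .
      ultimately have "int (card C') \<le> int (card X)" using cardX T'(4) by linarith
      then show ?thesis by simp
    qed
    then show ?thesis unfolding max_spanning_cactus_def using scs by blast
  qed
  show ?thesis using part1 part2 by blast
qed


end
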